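(* Suppose Assumptions 1–3 hold. For $p\in[1,\infty]$, any estimator $\hat\theta_{\ell_p}$ that minimizes $\|\hat g(\theta)\|_p$ over $\Theta$ satisfies, for all small enough $\gamma>0$, $$\hat g(\hat\theta_{\ell_p})=O_p\Big(\frac{m^3s^2}{n^{1-\gamma}}\Big).$$
   Context: Let $(Y_i,W_i,Z_i)$, $i=1,\dots,n$, be i.i.d. draws of $(Y,W,Z)$ with $Y\in\mathbb{R}$, $W\in\mathbb{R}^k$, $Z\in\mathbb{R}^k$. Fix $\tau\in(0,1)$ and $\Theta\subset\mathbb{R}^k$. Define $g(\theta)=E[(1\{Y\le W'\theta\}-\tau)Z]$, $\hat g(\theta)=\frac1n\sum_{i=1}^n(1\{Y_i\le W_i'\theta\}-\tau)Z_i$, $G(\theta)=\partial_\theta g(\theta)$. Assumption 1: (1.1) $\theta_0$ is the unique solution of $g(\theta)=0$ over $\Theta$, and $\theta_0$ is in the interior of the compact set $\Theta$; (1.2) $G(\theta_0)$ is well defined and has full rank. Assumption 2: (2.1) there is $m<\infty$ with $\|Z\|<m$ and $\|W\|<m$ a.s.; (2.2) $\|W\|>0$ a.s. and $W/\|W\|\in\{\tilde w_1,\dots,\tilde w_s\}\subset\mathbb{R}^k$ a.s., with $s\ll n$. Assumption 3: (3.1) the conditional density $f_Y(y\mid W,Z)$ exists and is a.s. uniformly bounded in $y$ on the support of $Y$ by $\bar f$; (3.2) $f_Y(y\mid W,Z)$ is a.s. twice continuously differentiable on the support of $Y$. ($\bar f$ is treated as a constant.) *)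

theory Defs
  imports "HOL-Probability.Probability"
begin

definition lp_norm :: "ereal \<Rightarrow> real^'k \<Rightarrow> real" where
  "lp_norm p x = (if p = \<infinity> then Max (range (\<lambda>i. \<bar>x $ i\<bar>))
      else (\<Sum>i\<in>UNIV. \<bar>x $ i\<bar> powr real_of_ereal p) powr (1 / real_of_ereal p))"

definition ghat :: "real \<Rightarrow> (nat \<Rightarrow> 'a \<Rightarrow> real) \<Rightarrow> (nat \<Rightarrow> 'a \<Rightarrow> real^'k) \<Rightarrow> (nat \<Rightarrow> 'a \<Rightarrow> real^'k)
     \<Rightarrow> nat \<Rightarrow> real^'k \<Rightarrow> 'a \<Rightarrow> real^'k" where
  "ghat tau Y W Z n \<theta> \<omega> =
     (1 / real n) *\<^sub>R (\<Sum>i<n. ((if Y i \<omega> \<le> W i \<omega> \<bullet> \<theta> then 1 else 0) - tau) *\<^sub>R Z i \<omega>)"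

definition gpop :: "'a measure \<Rightarrow> real \<Rightarrow> ('a \<Rightarrow> real) \<Rightarrow> ('a \<Rightarrow> real^'k) \<Rightarrow> ('a \<Rightarrow> real^'k)
     \<Rightarrow> real^'k \<Rightarrow> real^'k" where
  "gpop M tau Y W Z \<theta> =
     integral\<^sup>L M (\<lambda>\<omega>. ((if Y \<omega> \<le> W \<omega> \<bullet> \<theta> then 1 else 0) - tau) *\<^sub>R Z \<omega>)"

definition bigOp :: "'a measure \<Rightarrow> (nat \<Rightarrow> 'a \<Rightarrow> 'b::real_normed_vector) \<Rightarrow> (nat \<Rightarrow> real) \<Rightarrow> bool" where
  "bigOp M X a \<longleftrightarrow> (\<forall>\<epsilon>>0. \<exists>C N. \<forall>n\<ge>N.
      measure M {\<omega>\<in>space M. norm (X n \<omega>) > C * a n} < \<epsilon>)"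

definition rv_support :: "'a measure \<Rightarrow> ('a \<Rightarrow> real) \<Rightarrow> real set" where
  "rv_support M Y = {y. \<forall>e>0. measure M {\<omega>\<in>space M. \<bar>Y \<omega> - y\<bar> < e} > 0}"

definition C2_on :: "real set \<Rightarrow> (real \<Rightarrow> real) \<Rightarrow> bool" where
  "C2_on S h \<longleftrightarrow> (\<exists>h1 h2. (\<forall>y\<in>S. (h has_real_derivative h1 y) (at y within S)
      \<and> (h1 has_real_derivative h2 y) (at y within S)) \<and> continuous_on S h2)"

end

theory Submission
  imports Defs
begin

definition maxabs :: "real^'k \<Rightarrow> real" where
  "maxabs x = Max (range (\<lambda>i. \<bar>x $ i\<bar>))"

lemma maxabs_ge: "\<bar>x $ i\<bar> \<le> maxabs x"
  unfolding maxabs_def by (rule Max_ge) auto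

lemma maxabs_attain: "\<exists>i. maxabs x = \<bar>x $ i\<bar>"
proof -
  have "Max (range (\<lambda>i. \<bar>x $ i\<bar>)) \<in> range (\<lambda>i. \<bar>x $ i\<bar>)"
    by (rule Max_in) auto
  then obtain i where "Max (range (\<lambda>i. \<bar>x $ i\<bar>)) = \<bar>x $ i\<bar>" by blast
  then show ?thesis unfolding maxabs_def by blast
qed

lemma maxabs_nonneg: "0 \<le> maxabs x"
  using maxabs_ge[of x] abs_ge_zero order_trans by blast

lemma maxabs_le_norm: "maxabs x \<le> norm x"
  using maxabs_attain[of x] component_le_norm_cart by metis

lemma norm_le_maxabs: "norm x \<le> real CARD('k) * maxabs (x::real^'k)"
proof -
  have "norm x \<le> (\<Sum>i\<in>UNIV. \<bar>x $ i\<bar>)" by (rule norm_le_l1_cart)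
  also have "\<dots> \<le> (\<Sum>i\<in>(UNIV::'k set). maxabs x)" by (rule sum_mono) (rule maxabs_ge)
  finally show ?thesis by simp
qed

lemma lp_norm_ge:
  assumes p: "1 \<le> p"
  shows "maxabs x \<le> lp_norm p x"
proof (cases "p = \<infinity>")
  case True then show ?thesis by (simp add: lp_norm_def maxabs_def)
next
  case False
  then obtain r where r: "p = ereal r" using p by (cases p) auto
  with p have r1: "1 \<le> r" by simp
  obtain i where i: "maxabs x = \<bar>x $ i\<bar>" using maxabs_attain by blast
  have "\<bar>x $ i\<bar> powr r \<le> (\<Sum>j\<in>UNIV. \<bar>x $ j\<bar> powr r)"
    by (rule member_le_sum) auto
  then have "(\<bar>x $ i\<bar> powr r) powr (1/r) \<le> (\<Sum>j\<in>UNIV. \<bar>x $ j\<bar> powr r) powr (1/r)"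
    using r1 by (intro powr_mono2) auto
  moreover have "(\<bar>x $ i\<bar> powr r) powr (1/r) = \<bar>x $ i\<bar>"
    using r1 by (simp add: powr_powr)
  ultimately show ?thesis using r False i by (simp add: lp_norm_def)
qed

lemma lp_norm_le:
  assumes p: "1 \<le> p"
  shows "lp_norm p x \<le> real CARD('k) * maxabs (x::real^'k)"
proof (cases "p = \<infinity>")
  case True
  have "maxabs x \<le> real CARD('k) * maxabs x"
    using maxabs_nonneg[of x] by (simp add: mult_le_cancel_right1)
  then show ?thesis using True by (simp add: lp_norm_def maxabs_def)
next
  case False
  then obtain r where r: "p = ereal r" using p by (cases p) auto
  with p have r1: "1 \<le> r" by simp
  define M where "M = maxabs x"
  have M0: "0 \<le> M" using maxabs_nonneg M_def by simp
  have k1: "1 \<le> real CARD('k)" by simp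
  have "(\<Sum>j\<in>UNIV. \<bar>x $ j\<bar> powr r) \<le> (\<Sum>j\<in>(UNIV::'k set). M powr r)"
    using r1 by (intro sum_mono powr_mono2) (auto simp: M_def maxabs_ge)
  also have "\<dots> = real CARD('k) * M powr r" by simp
  finally have "(\<Sum>j\<in>UNIV. \<bar>x $ j\<bar> powr r) powr (1/r) \<le> (real CARD('k) * M powr r) powr (1/r)"
    using r1 by (intro powr_mono2 sum_nonneg) auto
  also have "\<dots> = real CARD('k) powr (1/r) * M"
    using r1 M0 by (simp add: powr_mult powr_powr)
  also have "\<dots> \<le> real CARD('k) * M"
  proof (rule mult_right_mono[OF _ M0])
    have "real CARD('k) powr (1/r) \<le> real CARD('k) powr 1"
      using r1 k1 by (intro powr_mono) auto
    then show "real CARD('k) powr (1/r) \<le> real CARD('k)" by simp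
  qed
  finally show ?thesis using r False by (simp add: lp_norm_def M_def)
qed

lemma grid_exists:
  fixes c :: "real^'k" and \<delta> \<rho> :: real
  assumes d0: "\<delta> > 0" and r0: "\<rho> > 0"
  shows "\<exists>G. finite G \<and> real (card G) \<le> (2*(\<rho>*CARD('k)/\<delta>) + 3) ^ CARD('k) \<and>
     (\<forall>\<theta>\<in>cball c \<rho>. \<exists>g\<in>G. norm (\<theta> - g) \<le> \<delta>)"
proof -
  define k where "k = real CARD('k)"
  have k1: "k \<ge> 1" by (simp add: k_def)
  define d where "d = \<delta> / k"
  have d0': "d > 0" using d0 k1 by (simp add: d_def)
  define J where "J = \<lceil>\<rho> / d\<rceil>"
  have J0: "J \<ge> 0" using r0 d0' unfolding J_def by (smt (verit) ceiling_le_zero divide_pos_pos)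
  define P where "P = PiE (UNIV::'k set) (\<lambda>_. {-J..J})"
  define G where "G = (\<lambda>j. c + (\<chi> l. d * of_int (j l))) ` P"
  have finP: "finite P" unfolding P_def by (intro finite_PiE) auto
  have "card G \<le> card P" unfolding G_def by (rule card_image_le[OF finP])
  also have "card P = (nat (2*J+1)) ^ CARD('k)"
    unfolding P_def by (simp add: card_PiE)
  finally have cG: "real (card G) \<le> real (nat (2*J+1)) ^ CARD('k)"
    by (metis of_nat_le_iff of_nat_power)
  have "real (nat (2*J+1)) = 2 * of_int J + 1" using J0 by simp
  also have "\<dots> \<le> 2*(\<rho>*CARD('k)/\<delta>) + 3"
  proof -
    have "of_int J \<le> \<rho>/d + 1" unfolding J_def by linarith
    also have "\<rho>/d = \<rho>*CARD('k)/\<delta>" using d0 k1 by (simp add: d_def k_def)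
    finally show ?thesis by linarith
  qed
  finally have "real (nat (2*J+1)) ^ CARD('k) \<le> (2*(\<rho>*CARD('k)/\<delta>) + 3) ^ CARD('k)"
    by (intro power_mono) auto
  with cG have card_ok: "real (card G) \<le> (2*(\<rho>*CARD('k)/\<delta>) + 3) ^ CARD('k)" by linarith
  have cover: "\<exists>g\<in>G. norm (\<theta> - g) \<le> \<delta>" if th: "\<theta> \<in> cball c \<rho>" for \<theta>
  proof -
    define x where "x = (\<lambda>l. (\<theta>$l - c$l) / d)"
    define j where "j = (\<lambda>l. round (x l))"
    have jb: "j l \<in> {-J..J}" for l
    proof -
      have "\<bar>\<theta>$l - c$l\<bar> \<le> norm (\<theta> - c)"
        using component_le_norm_cart[of "\<theta> - c" l] by simp
      also have "\<dots> \<le> \<rho>" using th by (simp add: dist_norm norm_minus_commute)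
      finally have "\<bar>x l\<bar> \<le> \<rho> / d" using d0' by (simp add: x_def abs_divide divide_right_mono)
      moreover have "\<rho>/d \<le> of_int J" unfolding J_def by simp
      moreover have "\<bar>of_int (j l) - x l\<bar> \<le> 1/2" unfolding j_def by (rule of_int_round_abs_le)
      ultimately have "of_int (j l) < of_int J + (1::real)" "of_int (j l) > - of_int J - (1::real)"
        by linarith+
      then have "j l < J + 1" "j l > -J - 1" by linarith+
      then show ?thesis by simp
    qed
    have jP: "j \<in> P" unfolding P_def using jb by auto
    define g where "g = c + (\<chi> l. d * of_int (j l))"
    have gG: "g \<in> G" unfolding G_def g_def using jP by blast
    have "norm (\<theta> - g) \<le> (\<Sum>l\<in>UNIV. \<bar>(\<theta> - g) $ l\<bar>)" by (rule norm_le_l1_cart)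
    also have "\<dots> \<le> (\<Sum>l\<in>(UNIV::'k set). d / 2)"
    proof (rule sum_mono)
      fix l
      have "(\<theta> - g) $ l = d * (x l - of_int (j l))"
        using d0' by (simp add: g_def x_def field_simps)
      moreover have "\<bar>of_int (j l) - x l\<bar> \<le> 1/2" unfolding j_def by (rule of_int_round_abs_le)
      ultimately show "\<bar>(\<theta> - g) $ l\<bar> \<le> d / 2"
        using d0' by (simp add: abs_mult abs_minus_commute)
    qed
    also have "\<dots> = k * d / 2" by (simp add: k_def)
    also have "\<dots> \<le> \<delta>" using d0 k1 by (simp add: d_def)
    finally show ?thesis using gG by blast
  qed
  show ?thesis using finP card_ok cover G_def by (intro exI[of _ G]) auto
qed

lemma lint_bound:
  fixes g :: "real \<Rightarrow> real"
  assumes B: "B \<subseteq> {a..b}" "a \<le> b" and c: "0 \<le> c" and gb: "\<And>y. y \<in> B \<Longrightarrow> g y \<le> c"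
  shows "(LINT y:B|lborel. g y) \<le> c * (b - a)"
proof (cases "integrable lborel (\<lambda>y. indicator B y *\<^sub>R g y)")
  case True
  have "(LINT y:B|lborel. g y) = integral\<^sup>L lborel (\<lambda>y. indicator B y *\<^sub>R g y)"
    by (simp add: set_lebesgue_integral_def)
  also have "\<dots> \<le> integral\<^sup>L lborel (\<lambda>y. c * indicator {a..b} y)"
  proof (rule integral_mono[OF True])
    show "integrable lborel (\<lambda>y. c * indicator {a..b} y)"
      by (intro integrable_mult_right) (simp add: integrable_indicator_iff emeasure_lborel_Icc_eq)
    fix y show "indicator B y *\<^sub>R g y \<le> c * indicator {a..b} y"
      using B gb c by (auto simp: indicator_def)
  qed
  also have "\<dots> = c * (b - a)" using B by simp
  finally show ?thesis .
next
  case False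
  then have "(LINT y:B|lborel. g y) = 0"
    by (simp add: set_lebesgue_integral_def not_integrable_integral_eq)
  then show ?thesis using c B by simp
qed

lemma dens_bound:
  fixes M :: "'a measure" and Y :: "'a \<Rightarrow> real" and W Z :: "'a \<Rightarrow> real^'k"
    and f :: "real^'k \<Rightarrow> real^'k \<Rightarrow> real \<Rightarrow> real" and \<theta> :: "real^'k"
  assumes P: "prob_space M"
    and mY[measurable]: "Y \<in> borel_measurable M" and mW[measurable]: "W \<in> borel_measurable M"
    and mZ[measurable]: "Z \<in> borel_measurable M"
    and bndW: "AE \<omega> in M. norm (W \<omega>) < m"
    and f_dens: "\<And>A B. A \<in> sets borel \<Longrightarrow> B \<in> sets borel \<Longrightarrow>
        measure M {\<omega>\<in>space M. (W \<omega>, Z \<omega>) \<in> A \<and> Y \<omega> \<in> B}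
        = integral\<^sup>L M (\<lambda>\<omega>. indicator A (W \<omega>, Z \<omega>) * (LINT y:B|lborel. f (W \<omega>) (Z \<omega>) y))"
    and f_bnd: "AE \<omega> in M. \<forall>y\<in>rv_support M Y. f (W \<omega>) (Z \<omega>) y \<le> fbar"
    and d: "\<delta> > 0"
  shows "measure M {\<omega>\<in>space M. \<bar>Y \<omega> - W \<omega> \<bullet> \<theta>\<bar> \<le> \<delta>} \<le> 3 * max fbar 0 * \<delta>"
proof -
  interpret prob_space M by (rule P)
  define fb where "fb = max fbar 0"
  have fb0: "fb \<ge> 0" by (simp add: fb_def)
  define Q where "Q = {(q,e). q \<in> \<rat> \<and> e \<in> \<rat> \<and> e > 0 \<and> prob {\<omega>\<in>space M. \<bar>Y \<omega> - q\<bar> < e} = 0}"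
  have cQ: "countable Q"
    by (rule countable_subset[of Q "\<rat> \<times> \<rat>"]) (auto simp: Q_def countable_rat)
  define S where "S = (\<Inter>x\<in>Q. {y. snd x \<le> \<bar>y - fst x\<bar>})"
  have Sb: "S \<in> sets borel"
  proof -
    have "closed S" unfolding S_def
      by (intro closed_INT ballI closed_Collect_le continuous_intros)
    then show ?thesis by (rule borel_closed)
  qed
  have AES: "AE \<omega> in M. Y \<omega> \<in> S"
  proof -
    have "AE \<omega> in M. \<forall>x\<in>Q. snd x \<le> \<bar>Y \<omega> - fst x\<bar>"
    proof (subst AE_ball_countable[OF cQ], intro ballI)
      fix x assume "x \<in> Q"
      then obtain q e where x: "x = (q,e)" and pe: "prob {\<omega>\<in>space M. \<bar>Y \<omega> - q\<bar> < e} = 0"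
        by (auto simp: Q_def)
      have "AE \<omega> in M. \<not> \<bar>Y \<omega> - q\<bar> < e"
        using pe by (subst prob_Collect_eq_0[symmetric]) auto
      then show "AE \<omega> in M. snd x \<le> \<bar>Y \<omega> - fst x\<bar>" by (auto simp: x)
    qed
    then show ?thesis by (auto simp: S_def)
  qed
  have SS: "S \<subseteq> rv_support M Y"
  proof
    fix y assume yS: "y \<in> S"
    show "y \<in> rv_support M Y"
    proof (rule ccontr)
      assume "y \<notin> rv_support M Y"
      then obtain e where e0: "e > 0" and ne: "\<not> prob {\<omega>\<in>space M. \<bar>Y \<omega> - y\<bar> < e} > 0"
        by (auto simp: rv_support_def)
      obtain q where q: "q \<in> \<rat>" "y - e/4 < q" "q < y + e/4"
        using Rats_dense_in_real[of "y - e/4" "y + e/4"] e0 by auto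
      obtain e' where e': "e' \<in> \<rat>" "e/4 < e'" "e' < e/2"
        using Rats_dense_in_real[of "e/4" "e/2"] e0 by auto
      have "prob {\<omega>\<in>space M. \<bar>Y \<omega> - q\<bar> < e'} \<le> prob {\<omega>\<in>space M. \<bar>Y \<omega> - y\<bar> < e}"
        using q e' by (intro finite_measure_mono) auto
      then have "prob {\<omega>\<in>space M. \<bar>Y \<omega> - q\<bar> < e'} = 0"
        using ne measure_nonneg[of M "{\<omega>\<in>space M. \<bar>Y \<omega> - q\<bar> < e'}"] by linarith
      then have "(q,e') \<in> Q" using q e' e0 by (auto simp: Q_def)
      then have "e' \<le> \<bar>y - q\<bar>" using yS by (auto simp: S_def)
      then show False using q e' by linarith
    qed
  qed
  have slice: "prob {\<omega>\<in>space M. (W \<omega>, Z \<omega>) \<in> A \<and> Y \<omega> \<in> {a..a+3*\<delta>}}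
      \<le> fb * (3*\<delta>) * prob {\<omega>\<in>space M. (W \<omega>, Z \<omega>) \<in> A}" if A: "A \<in> sets borel" for A a
  proof -
    have NS: "prob {\<omega>\<in>space M. Y \<omega> \<notin> S} = 0"
      using AES Sb by (subst prob_Collect_eq_0) auto
    have "prob {\<omega>\<in>space M. (W \<omega>, Z \<omega>) \<in> A \<and> Y \<omega> \<in> {a..a+3*\<delta>}}
        \<le> prob ({\<omega>\<in>space M. (W \<omega>, Z \<omega>) \<in> A \<and> Y \<omega> \<in> {a..a+3*\<delta>} \<inter> S} \<union> {\<omega>\<in>space M. Y \<omega> \<notin> S})"
      using A Sb by (intro finite_measure_mono) auto
    also have "\<dots> \<le> prob {\<omega>\<in>space M. (W \<omega>, Z \<omega>) \<in> A \<and> Y \<omega> \<in> {a..a+3*\<delta>} \<inter> S} + prob {\<omega>\<in>space M. Y \<omega> \<notin> S}"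
      using A Sb by (intro measure_Un_le) auto
    also have "\<dots> = integral\<^sup>L M (\<lambda>\<omega>. indicator A (W \<omega>, Z \<omega>) * (LINT y:({a..a+3*\<delta>} \<inter> S)|lborel. f (W \<omega>) (Z \<omega>) y))"
      using NS A Sb f_dens[of A "{a..a+3*\<delta>} \<inter> S"] by simp
    also have "\<dots> \<le> integral\<^sup>L M (\<lambda>\<omega>. indicator A (W \<omega>, Z \<omega>) * (fb * (3*\<delta>)))"
    proof (rule integral_mono_AE')
      show "integrable M (\<lambda>\<omega>. indicator A (W \<omega>, Z \<omega>) * (fb * (3*\<delta>)))"
        using A by (intro integrable_const_bound[where B="fb * (3*\<delta>)"]) (use fb0 d in \<open>auto simp: indicator_def\<close>)
      show "AE x in M. 0 \<le> indicator A (W x, Z x) * (fb * (3 * \<delta>))"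
        using fb0 d by auto
      show "AE x in M. indicator A (W x, Z x) * (LINT y:({a..a+3*\<delta>} \<inter> S)|lborel. f (W x) (Z x) y)
            \<le> indicator A (W x, Z x) * (fb * (3 * \<delta>))"
        using f_bnd
      proof eventually_elim
        case (elim x)
        have "(LINT y:({a..a+3*\<delta>} \<inter> S)|lborel. f (W x) (Z x) y) \<le> fb * (a + 3*\<delta> - a)"
          using elim SS d fb0 by (intro lint_bound) (force simp: fb_def intro: le_max_iff_disj[THEN iffD2])+
        then show ?case by (auto simp: indicator_def)
      qed
    qed
    also have "\<dots> = fb * (3*\<delta>) * prob {\<omega>\<in>space M. (W \<omega>, Z \<omega>) \<in> A}"
    proof -
      have "integral\<^sup>L M (\<lambda>\<omega>. indicator A (W \<omega>, Z \<omega>) * (fb * (3*\<delta>)))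
          = integral\<^sup>L M (\<lambda>\<omega>. indicator {\<omega>\<in>space M. (W \<omega>, Z \<omega>) \<in> A} \<omega> * (fb * (3*\<delta>)))"
        by (rule Bochner_Integration.integral_cong) (auto simp: indicator_def)
      also have "\<dots> = prob {\<omega>\<in>space M. (W \<omega>, Z \<omega>) \<in> A} * (fb * (3*\<delta>))"
        by (simp add: Int_absorb2)
      finally show ?thesis by simp
    qed
    finally show ?thesis .
  qed
  define R where "R = \<bar>m\<bar> * norm \<theta>"
  define J :: int where "J = \<lceil>R / \<delta>\<rceil> + 1"
  define A where "A = (\<lambda>j::int. {p::((real^'k) \<times> (real^'k)). of_int j * \<delta> \<le> fst p \<bullet> \<theta> \<and> fst p \<bullet> \<theta> < (of_int j + 1) * \<delta>})"
  have Ab: "A j \<in> sets borel" for j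
  proof -
    have "A j = {p::((real^'k) \<times> (real^'k)). of_int j * \<delta> \<le> fst p \<bullet> \<theta>} \<inter> {p. fst p \<bullet> \<theta> < (of_int j + 1) * \<delta>}"
      unfolding A_def by auto
    moreover have "closed {p::((real^'k) \<times> (real^'k)). of_int j * \<delta> \<le> fst p \<bullet> \<theta>}"
      by (intro closed_Collect_le continuous_intros)
    moreover have "open {p::((real^'k) \<times> (real^'k)). fst p \<bullet> \<theta> < (of_int j + 1) * \<delta>}"
      by (intro open_Collect_less continuous_intros)
    ultimately show ?thesis by (auto intro: borel_closed borel_open)
  qed
  define E where "E = (\<lambda>j::int. {\<omega>\<in>space M. (W \<omega>, Z \<omega>) \<in> A j \<and> Y \<omega> \<in> {of_int j * \<delta> - \<delta> .. of_int j * \<delta> - \<delta> + 3*\<delta>}})"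
  define F where "F = (\<lambda>j::int. {\<omega>\<in>space M. (W \<omega>, Z \<omega>) \<in> A j})"
  define N where "N = {\<omega>\<in>space M. \<not> norm (W \<omega>) < m}"
  have Eb: "E j \<in> sets M" for j unfolding E_def using Ab[of j] by measurable
  have Fb: "F j \<in> sets M" for j unfolding F_def using Ab[of j] by measurable
  have Nb: "N \<in> sets M" unfolding N_def by measurable
  have N0: "prob N = 0" unfolding N_def using bndW by (subst prob_Collect_eq_0) auto
  have incl: "{\<omega>\<in>space M. \<bar>Y \<omega> - W \<omega> \<bullet> \<theta>\<bar> \<le> \<delta>} \<subseteq> (\<Union>j\<in>{-J..J}. E j) \<union> N"
  proof
    fix \<omega> assume \<omega>: "\<omega> \<in> {\<omega>\<in>space M. \<bar>Y \<omega> - W \<omega> \<bullet> \<theta>\<bar> \<le> \<delta>}"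
    show "\<omega> \<in> (\<Union>j\<in>{-J..J}. E j) \<union> N"
    proof (cases "norm (W \<omega>) < m")
      case False then show ?thesis using \<omega> by (auto simp: N_def)
    next
      case True
      define u where "u = W \<omega> \<bullet> \<theta>"
      have "\<bar>u\<bar> \<le> norm (W \<omega>) * norm \<theta>" unfolding u_def by (rule Cauchy_Schwarz_ineq2)
      also have "\<dots> \<le> R" unfolding R_def using True by (intro mult_right_mono) auto
      finally have uR: "\<bar>u\<bar> \<le> R" .
      define j where "j = \<lfloor>u / \<delta>\<rfloor>"
      have "R / \<delta> \<le> of_int (\<lceil>R / \<delta>\<rceil>)" by simp
      moreover have "\<bar>u / \<delta>\<bar> \<le> R / \<delta>" using uR d by (simp add: abs_divide divide_right_mono)
      ultimately have "\<bar>u / \<delta>\<bar> \<le> of_int \<lceil>R / \<delta>\<rceil>" by linarith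
      then have "\<bar>u / \<delta>\<bar> \<le> of_int (J - 1)" unfolding J_def by simp
      then have "- of_int J + 1 \<le> u / \<delta>" "u / \<delta> \<le> of_int J - 1" by (smt (verit) of_int_diff of_int_1)+
      then have jJ: "j \<in> {-J..J}" unfolding j_def by (simp add: le_floor_iff floor_le_iff)
      have "of_int j \<le> u / \<delta>" "u / \<delta> < of_int j + 1" unfolding j_def by linarith+
      then have ju: "of_int j * \<delta> \<le> u" "u < (of_int j + 1) * \<delta>"
        using d by (simp_all add: field_simps)
      have "\<omega> \<in> E j" using \<omega> ju unfolding E_def A_def u_def by (auto simp: abs_le_iff algebra_simps)
      then show ?thesis using jJ by blast
    qed
  qed
  have "prob {\<omega>\<in>space M. \<bar>Y \<omega> - W \<omega> \<bullet> \<theta>\<bar> \<le> \<delta>} \<le> prob ((\<Union>j\<in>{-J..J}. E j) \<union> N)"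
    using incl Eb Nb by (intro finite_measure_mono) auto
  also have "\<dots> \<le> prob (\<Union>j\<in>{-J..J}. E j) + prob N"
    using Eb Nb by (intro measure_Un_le) auto
  also have "\<dots> \<le> (\<Sum>j\<in>{-J..J}. prob (E j))"
    using N0 Eb by (simp add: finite_measure_subadditive_finite image_subset_iff)
  also have "\<dots> \<le> (\<Sum>j\<in>{-J..J}. fb * (3*\<delta>) * prob (F j))"
    unfolding E_def F_def by (intro sum_mono slice Ab)
  also have "\<dots> = fb * (3*\<delta>) * prob (\<Union>j\<in>{-J..J}. F j)"
  proof -
    have "disjoint_family_on F {-J..J}"
    unfolding disjoint_family_on_def
    proof (intro ballI impI)
      fix i j :: int assume "i \<noteq> j"
      show "F i \<inter> F j = {}"
      proof (rule ccontr)
        assume "F i \<inter> F j \<noteq> {}"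
        then obtain \<omega> where "\<omega> \<in> F i" "\<omega> \<in> F j" by blast
        then have h: "of_int i * \<delta> < (of_int j + 1) * \<delta>" "of_int j * \<delta> < (of_int i + 1) * \<delta>"
          unfolding F_def A_def by auto
        then have "of_int i < (of_int j + (1::real))" "of_int j < of_int i + (1::real)"
          using d by (simp_all add: mult_less_cancel_right)
        then have "i < j + 1" "j < i + 1" by linarith+
        then show False using \<open>i \<noteq> j\<close> by linarith
      qed
    qed
    then show ?thesis
      using Fb by (simp add: finite_measure_finite_Union image_subset_iff sum_distrib_left)
  qed
  also have "\<dots> \<le> fb * (3*\<delta>) * 1"
    using fb0 d by (intro mult_left_mono) auto
  finally show ?thesis by (simp add: fb_def)
qed

locale iidm = prob_space M for M :: "'a measure" +
  fixes Y :: "nat \<Rightarrow> 'a \<Rightarrow> real" and W Z :: "nat \<Rightarrow> 'a \<Rightarrow> real^'k"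
  assumes indep: "indep_vars (\<lambda>_. borel) (\<lambda>i \<omega>. (Y i \<omega>, W i \<omega>, Z i \<omega>)) UNIV"
  and ident: "\<And>i. distr M borel (\<lambda>\<omega>. (Y i \<omega>, W i \<omega>, Z i \<omega>)) = distr M borel (\<lambda>\<omega>. (Y 0 \<omega>, W 0 \<omega>, Z 0 \<omega>))"
begin

definition T where "T i = (\<lambda>\<omega>. (Y i \<omega>, W i \<omega>, Z i \<omega>))"

lemma T_meas[measurable]: "T i \<in> borel_measurable M"
  using indep unfolding indep_vars_def T_def by auto

lemma T_meas': "T i \<in> M \<rightarrow>\<^sub>M borel \<Otimes>\<^sub>M (borel \<Otimes>\<^sub>M borel)"
  using T_meas[of i] by (simp only: borel_prod)

lemma Y_meas[measurable]: "Y i \<in> borel_measurable M"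
proof -
  have "Y i = (\<lambda>\<omega>. fst (T i \<omega>))" by (auto simp: T_def)
  then show ?thesis using T_meas'[of i] by simp
qed

lemma W_meas[measurable]: "W i \<in> borel_measurable M"
proof -
  have "W i = (\<lambda>\<omega>. fst (snd (T i \<omega>)))" by (auto simp: T_def)
  then show ?thesis using T_meas'[of i] by simp
qed

lemma Z_meas[measurable]: "Z i \<in> borel_measurable M"
proof -
  have "Z i = (\<lambda>\<omega>. snd (snd (T i \<omega>)))" by (auto simp: T_def)
  then show ?thesis using T_meas'[of i] by simp
qed

lemma distr_T: "distr M borel (T i) = distr M borel (T 0)"
  using ident unfolding T_def by simp

lemma prob_T:
  assumes "S \<in> sets borel"
  shows "prob {\<omega>\<in>space M. T i \<omega> \<in> S} = prob {\<omega>\<in>space M. T 0 \<omega> \<in> S}"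
proof -
  have "prob {\<omega>\<in>space M. T i \<omega> \<in> S} = measure (distr M borel (T i)) S"
    using assms by (subst measure_distr) (auto intro!: arg_cong[where f="measure M"])
  also have "\<dots> = measure (distr M borel (T 0)) S" by (simp only: distr_T[of i])
  also have "\<dots> = prob {\<omega>\<in>space M. T 0 \<omega> \<in> S}"
    using assms by (subst measure_distr) (auto intro!: arg_cong[where f="measure M"])
  finally show ?thesis .
qed

lemma AE_T:
  assumes P[measurable]: "Measurable.pred borel P" and ae: "AE \<omega> in M. P (T 0 \<omega>)"
  shows "AE \<omega> in M. P (T i \<omega>)"
proof -
  have "AE x in distr M borel (T 0). P x" using ae by (subst AE_distr_iff) auto
  then have "AE x in distr M borel (T i). P x" by (simp only: distr_T[of i])
  then show ?thesis using AE_distr_iff[of "T i" M borel P] by auto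
qed

lemma integral_T:
  fixes h :: "real \<times> (real^'k) \<times> (real^'k) \<Rightarrow> 'b::{banach,second_countable_topology}"
  assumes [measurable]: "h \<in> borel_measurable borel"
  shows "expectation (\<lambda>\<omega>. h (T i \<omega>)) = expectation (\<lambda>\<omega>. h (T 0 \<omega>))"
proof -
  have "expectation (\<lambda>\<omega>. h (T i \<omega>)) = integral\<^sup>L (distr M borel (T i)) h"
    by (subst integral_distr) auto
  also have "\<dots> = integral\<^sup>L (distr M borel (T 0)) h" by (simp only: distr_T[of i])
  also have "\<dots> = expectation (\<lambda>\<omega>. h (T 0 \<omega>))"
    by (subst integral_distr) auto
  finally show ?thesis .
qed

lemma hoeff:
  fixes h :: "real \<times> (real^'k) \<times> (real^'k) \<Rightarrow> real"
  assumes h[measurable]: "h \<in> borel_measurable borel"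
    and bnd: "AE \<omega> in M. h (T 0 \<omega>) \<in> {a..b}" and ab: "a < b" and eta: "\<eta> \<ge> 0" and n: "n > 0"
  shows "prob {\<omega>\<in>space M. \<bar>(\<Sum>i\<in>{..<n}. h (T i \<omega>)) / real n - expectation (\<lambda>\<omega>. h (T 0 \<omega>))\<bar> \<ge> \<eta>}
     \<le> 2 * exp (-2 * real n * \<eta>\<^sup>2 / (b - a)\<^sup>2)"
proof -
  interpret H: Hoeffding_ineq_iid M "{..<n}" "\<lambda>i \<omega>. h (T i \<omega>)" "\<lambda>\<omega>. h (T 0 \<omega>)" a b
    "expectation (\<lambda>\<omega>. h (T 0 \<omega>))"
  proof unfold_locales
    show "finite {..<n}" by simp
    have "indep_vars (\<lambda>_. borel) (\<lambda>i \<omega>. h (T i \<omega>)) UNIV"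
      using indep unfolding T_def by (intro indep_vars_compose2[where Y="\<lambda>_. h"]) auto
    then show "indep_vars (\<lambda>_. borel) (\<lambda>i \<omega>. h (T i \<omega>)) {..<n}"
      by (rule indep_vars_subset) auto
    fix i
    have "distr M borel (\<lambda>\<omega>. h (T i \<omega>)) = distr (distr M borel (T i)) borel h"
      by (subst distr_distr) (auto simp: comp_def)
    also have "\<dots> = distr (distr M borel (T 0)) borel h" by (simp only: distr_T[of i])
    also have "\<dots> = distr M borel (\<lambda>\<omega>. h (T 0 \<omega>))"
      by (subst distr_distr) (auto simp: comp_def)
    finally show "distr M borel (\<lambda>\<omega>. h (T i \<omega>)) = distr M borel (\<lambda>\<omega>. h (T 0 \<omega>))" .
    show "random_variable borel (\<lambda>\<omega>. h (T 0 \<omega>))" by simp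
    show "AE x in M. h (T 0 x) \<in> {a..b}" by (rule bnd)
  qed
  have ne: "{..<n} \<noteq> {}" using n by auto
  have "card {..<n} = n" by simp
  then show ?thesis using H.Hoeffding_ineq_abs_ge'[OF eta ab ne] by (simp only:)
qed

lemma count_bound:
  assumes S[measurable]: "S \<in> sets borel" and q: "prob {\<omega>\<in>space M. T 0 \<omega> \<in> S} \<le> q" and K: "K > 0"
  shows "\<exists>U\<in>sets M. {\<omega>\<in>space M. K \<le> card {i\<in>{..<n}. T i \<omega> \<in> S}} \<subseteq> U \<and> prob U \<le> real n ^ K * q ^ K"
proof -
  define F where "F = {B. B \<subseteq> {..<n} \<and> card B = K}"
  define A where "A = (\<lambda>B. \<Inter>i\<in>B. T i -` S \<inter> space M)"
  have finF: "finite F" unfolding F_def by simp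
  have q0: "0 \<le> q" using q measure_nonneg order_trans by blast
  have Ameas: "A B \<in> sets M" if "B \<in> F" for B
  proof -
    from that K have "B \<noteq> {}" "finite B" by (auto simp: F_def finite_subset)
    then show ?thesis unfolding A_def by (intro sets.finite_INT) auto
  qed
  have incl: "{\<omega>\<in>space M. K \<le> card {i\<in>{..<n}. T i \<omega> \<in> S}} \<subseteq> (\<Union>B\<in>F. A B)"
  proof
    fix \<omega> assume \<omega>: "\<omega> \<in> {\<omega>\<in>space M. K \<le> card {i\<in>{..<n}. T i \<omega> \<in> S}}"
    then obtain B where B: "B \<subseteq> {i\<in>{..<n}. T i \<omega> \<in> S}" "card B = K"
      by (auto elim: obtain_subset_with_card_n)
    then have "B \<in> F" by (auto simp: F_def)
    moreover have "\<omega> \<in> A B" using B \<omega> by (auto simp: A_def)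
    ultimately show "\<omega> \<in> (\<Union>B\<in>F. A B)" by blast
  qed
  have Um: "(\<Union>B\<in>F. A B) \<in> sets M" using Ameas finF by auto
  have "prob (\<Union>B\<in>F. A B) \<le> (\<Sum>B\<in>F. prob (A B))"
    using Ameas finF by (intro finite_measure_subadditive_finite) auto
  also have "\<dots> \<le> (\<Sum>B\<in>F. q ^ K)"
  proof (rule sum_mono)
    fix B assume BF: "B \<in> F"
    from BF K have B: "B \<noteq> {}" "finite B" "card B = K" by (auto simp: F_def finite_subset)
    have "prob (A B) = (\<Prod>i\<in>B. prob (T i -` S \<inter> space M))"
      unfolding A_def using B indep unfolding T_def
      by (intro indep_varsD[where M'="\<lambda>_. borel"]) auto
    also have "\<dots> \<le> (\<Prod>i\<in>B. q)"
    proof (rule prod_mono)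
      fix i assume "i \<in> B"
      have "prob (T i -` S \<inter> space M) = prob {\<omega>\<in>space M. T i \<omega> \<in> S}"
        by (auto intro!: arg_cong[where f="measure M"])
      also have "\<dots> = prob {\<omega>\<in>space M. T 0 \<omega> \<in> S}" by (rule prob_T[OF S])
      finally show "0 \<le> prob (T i -` S \<inter> space M) \<and> prob (T i -` S \<inter> space M) \<le> q"
        using q by simp
    qed
    finally show "prob (A B) \<le> q ^ K" using B by simp
  qed
  also have "\<dots> = real (n choose K) * q ^ K"
    unfolding F_def by (simp add: n_subsets)
  also have "\<dots> \<le> real n ^ K * q ^ K"
  proof (rule mult_right_mono[OF _ zero_le_power[OF q0]])
    show "real (n choose K) \<le> real n ^ K"
    proof (cases "K \<le> n")
      case True then show ?thesis using binomial_le_pow[OF True] by (metis of_nat_le_iff of_nat_power)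
    next
      case False then show ?thesis by (simp add: binomial_eq_0)
    qed
  qed
  finally show ?thesis using incl Um by blast
qed

end

lemma ind_diff:
  fixes w \<theta> \<theta>' :: "real^'k"
  assumes "norm w < m" "norm (\<theta> - \<theta>') \<le> \<delta>"
  shows "\<bar>(if y \<le> w \<bullet> \<theta> then 1 else 0) - (if y \<le> w \<bullet> \<theta>' then 1 else 0 :: real)\<bar>
     \<le> (if \<bar>y - w \<bullet> \<theta>'\<bar> \<le> m * \<delta> then 1 else 0)"
proof -
  have "\<bar>w \<bullet> \<theta> - w \<bullet> \<theta>'\<bar> = \<bar>w \<bullet> (\<theta> - \<theta>')\<bar>" by (simp add: inner_diff_right)
  also have "\<dots> \<le> norm w * norm (\<theta> - \<theta>')" by (rule Cauchy_Schwarz_ineq2)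
  also have "\<dots> \<le> m * \<delta>"
  proof -
    have "0 \<le> m" using assms(1) norm_ge_zero[of w] by linarith
    then show ?thesis using assms by (intro mult_mono) auto
  qed
  finally have h: "\<bar>w \<bullet> \<theta> - w \<bullet> \<theta>'\<bar> \<le> m * \<delta>" .
  show ?thesis using h by (auto split: if_splits)
qed

definition psi :: "real \<Rightarrow> real \<Rightarrow> real" where
  "psi r x = max 0 (min 1 (1 + x / r))"

lemma psi_ind:
  assumes r: "r > 0"
  shows "\<bar>(if y \<le> u then 1 else 0) - psi r (u - y)\<bar> \<le> (if \<bar>y - u\<bar> < r then 1 else 0)"
proof (cases "y \<le> u")
  case True
  then have "1 + (u - y) / r \<ge> 1" using r by simp
  then show ?thesis using True by (auto simp: psi_def)
next
  case False
  show ?thesis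
  proof (cases "u - y \<le> -r")
    case True
    then have "(u - y) / r \<le> -1" using r by (simp add: divide_le_eq)
    then have "1 + (u - y) / r \<le> 0" by simp
    then show ?thesis using False by (auto simp: psi_def)
  next
    case False2: False
    then have "\<bar>y - u\<bar> < r" using False by auto
    moreover have "0 \<le> psi r (u - y)" "psi r (u - y) \<le> 1" by (auto simp: psi_def)
    ultimately show ?thesis by auto
  qed
qed

lemma sum_if_card:
  assumes "finite A"
  shows "(\<Sum>i\<in>A. if P i then 1 else 0 :: real) = real (card {i\<in>A. P i})"
proof -
  have "(\<Sum>i\<in>A. if P i then 1 else 0 :: real) = (\<Sum>i\<in>{i\<in>A. P i}. 1)"
    using sum.inter_filter[OF assms, of "\<lambda>i. 1::real" P] by simp
  then show ?thesis by simp
qed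

locale qrm = iidm M Y W Z for M :: "'a measure" and Y and W Z :: "nat \<Rightarrow> 'a \<Rightarrow> real^'k" +
  fixes m fb tau :: real
  assumes m0: "m > 0" and fb0: "fb \<ge> 0" and tau0: "0 < tau" and tau1: "tau < 1"
  and bndZ: "AE \<omega> in M. norm (Z 0 \<omega>) < m" and bndW: "AE \<omega> in M. norm (W 0 \<omega>) < m"
  and dens: "\<And>\<theta> \<delta>. \<delta> > 0 \<Longrightarrow> prob {\<omega>\<in>space M. \<bar>Y 0 \<omega> - W 0 \<omega> \<bullet> \<theta>\<bar> \<le> \<delta>} \<le> 3 * fb * \<delta>"
begin

abbreviation gp where "gp \<equiv> gpop M tau (Y 0) (W 0) (Z 0)"

definition Nall where "Nall = {\<omega>\<in>space M. \<exists>i. \<not> (norm (Z i \<omega>) < m \<and> norm (W i \<omega>) < m)}"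

lemma Nall_sets: "Nall \<in> sets M" unfolding Nall_def by measurable

lemma Nall_prob: "prob Nall = 0"
proof -
  have "AE \<omega> in M. \<forall>i. norm (Z i \<omega>) < m \<and> norm (W i \<omega>) < m"
  proof (subst AE_all_countable, intro allI)
    fix i
    have pm: "Measurable.pred borel (\<lambda>t::real \<times> (real^'k) \<times> (real^'k). norm (snd (snd t)) < m \<and> norm (fst (snd t)) < m)"
      unfolding borel_prod[symmetric] by measurable
    have "AE \<omega> in M. (\<lambda>t::real \<times> (real^'k) \<times> (real^'k). norm (snd (snd t)) < m \<and> norm (fst (snd t)) < m) (T 0 \<omega>)"
      using bndZ bndW by eventually_elim (simp add: T_def)
    from AE_T[OF pm this] show "AE \<omega> in M. norm (Z i \<omega>) < m \<and> norm (W i \<omega>) < m" by (simp add: T_def)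
  qed
  then show ?thesis unfolding Nall_def by (subst prob_Collect_eq_0) (auto simp: Nall_def[symmetric] Nall_sets)
qed

lemma integral_if:
  assumes "{\<omega>\<in>space M. P \<omega>} \<in> sets M"
  shows "expectation (\<lambda>\<omega>. if P \<omega> then 1 else 0::real) = prob {\<omega>\<in>space M. P \<omega>}"
proof -
  have "expectation (\<lambda>\<omega>. if P \<omega> then 1 else 0::real) = expectation (indicator {\<omega>\<in>space M. P \<omega>})"
    by (rule Bochner_Integration.integral_cong) (auto simp: indicator_def)
  then show ?thesis by (simp add: Int_absorb2)
qed

definition F where "F \<theta> \<omega> = ((if Y 0 \<omega> \<le> W 0 \<omega> \<bullet> \<theta> then 1 else 0) - tau) *\<^sub>R Z 0 \<omega>"

lemma F_meas[measurable]: "F \<theta> \<in> borel_measurable M" unfolding F_def by measurable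

lemma ind_tau: "\<bar>(if P then 1 else 0) - tau\<bar> \<le> 1"
  using tau0 tau1 by auto

lemma F_bnd: "AE \<omega> in M. norm (F \<theta> \<omega>) \<le> m"
  using bndZ
proof eventually_elim
  case (elim \<omega>)
  have "norm (F \<theta> \<omega>) = \<bar>(if Y 0 \<omega> \<le> W 0 \<omega> \<bullet> \<theta> then 1 else 0) - tau\<bar> * norm (Z 0 \<omega>)"
    by (simp add: F_def)
  also have "\<dots> \<le> 1 * m" using elim ind_tau by (intro mult_mono) auto
  finally show ?case by simp
qed

lemma F_int: "integrable M (F \<theta>)"
  by (rule integrable_const_bound[OF F_bnd F_meas])

lemma gp_F: "gp \<theta> = integral\<^sup>L M (F \<theta>)"
  unfolding gpop_def F_def by simp

lemma gp_lip:
  assumes "norm (\<theta> - \<theta>') \<le> \<delta>" "\<delta> > 0"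
  shows "norm (gp \<theta> - gp \<theta>') \<le> m * (3 * fb * (m * \<delta>))"
proof -
  have "gp \<theta> - gp \<theta>' = integral\<^sup>L M (\<lambda>\<omega>. F \<theta> \<omega> - F \<theta>' \<omega>)"
    by (simp add: gp_F F_int)
  then have "norm (gp \<theta> - gp \<theta>') \<le> integral\<^sup>L M (\<lambda>\<omega>. norm (F \<theta> \<omega> - F \<theta>' \<omega>))"
    using integral_norm_bound[of M "\<lambda>\<omega>. F \<theta> \<omega> - F \<theta>' \<omega>"] by (simp only:)
  also have "\<dots> \<le> integral\<^sup>L M (\<lambda>\<omega>. m * (if \<bar>Y 0 \<omega> - W 0 \<omega> \<bullet> \<theta>'\<bar> \<le> m * \<delta> then 1 else 0))"
  proof (rule integral_mono_AE')
    show "integrable M (\<lambda>\<omega>. m * (if \<bar>Y 0 \<omega> - W 0 \<omega> \<bullet> \<theta>'\<bar> \<le> m * \<delta> then 1 else 0))"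
      by (intro integrable_mult_right integrable_const_bound[where B=1]) auto
    show "AE \<omega> in M. 0 \<le> m * (if \<bar>Y 0 \<omega> - W 0 \<omega> \<bullet> \<theta>'\<bar> \<le> m * \<delta> then 1 else 0)"
      using m0 by auto
    show "AE \<omega> in M. norm (F \<theta> \<omega> - F \<theta>' \<omega>) \<le> m * (if \<bar>Y 0 \<omega> - W 0 \<omega> \<bullet> \<theta>'\<bar> \<le> m * \<delta> then 1 else 0)"
      using bndZ bndW
    proof eventually_elim
      case (elim \<omega>)
      have "F \<theta> \<omega> - F \<theta>' \<omega> = ((if Y 0 \<omega> \<le> W 0 \<omega> \<bullet> \<theta> then 1 else 0) - (if Y 0 \<omega> \<le> W 0 \<omega> \<bullet> \<theta>' then 1 else 0)) *\<^sub>R Z 0 \<omega>"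
        by (simp add: F_def algebra_simps)
      then have "norm (F \<theta> \<omega> - F \<theta>' \<omega>) = \<bar>(if Y 0 \<omega> \<le> W 0 \<omega> \<bullet> \<theta> then 1 else 0) - (if Y 0 \<omega> \<le> W 0 \<omega> \<bullet> \<theta>' then 1 else 0 :: real)\<bar> * norm (Z 0 \<omega>)"
        by simp
      also have "\<dots> \<le> (if \<bar>Y 0 \<omega> - W 0 \<omega> \<bullet> \<theta>'\<bar> \<le> m * \<delta> then 1 else 0) * m"
        using elim ind_diff[of "W 0 \<omega>" m \<theta> \<theta>' \<delta> "Y 0 \<omega>"] assms by (intro mult_mono) auto
      finally show ?case by (simp add: mult.commute)
    qed
  qed
  also have "\<dots> = m * prob {\<omega>\<in>space M. \<bar>Y 0 \<omega> - W 0 \<omega> \<bullet> \<theta>'\<bar> \<le> m * \<delta>}"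
    by (subst integral_mult_right_zero) (simp add: integral_if)
  also have "\<dots> \<le> m * (3 * fb * (m * \<delta>))"
    using dens[of "m * \<delta>" \<theta>'] m0 assms by (intro mult_left_mono) auto
  finally show ?thesis .
qed

end

lemma vec_nth_meas[measurable (raw)]:
  fixes f :: "'b \<Rightarrow> real^'k"
  shows "f \<in> borel_measurable N \<Longrightarrow> (\<lambda>x. f x $ l) \<in> borel_measurable N"
  by (rule borel_measurable_continuous_on[where f="\<lambda>x. x $ l"]) (auto intro: continuous_intros)

context qrm begin

definition gt where
  "gt n \<omega> \<theta> = (1 / real n) *\<^sub>R (\<Sum>i<n. (psi (1 / (real n)^2) (W i \<omega> \<bullet> \<theta> - Y i \<omega>) - tau) *\<^sub>R Z i \<omega>)"

lemma gt_cont: "continuous_on S (gt n \<omega>)"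
  unfolding gt_def psi_def divide_inverse by (intro continuous_intros)

lemma Nall_bnd:
  assumes "\<omega> \<in> space M - Nall"
  shows "norm (Z i \<omega>) < m" "norm (W i \<omega>) < m"
  using assms by (auto simp: Nall_def)

lemma ghat_gt:
  assumes om: "\<omega> \<in> space M - Nall" and n: "n > 0"
  shows "norm (ghat tau Y W Z n \<theta> \<omega> - gt n \<omega> \<theta>)
     \<le> m / real n * real (card {i\<in>{..<n}. \<bar>Y i \<omega> - W i \<omega> \<bullet> \<theta>\<bar> < 1 / (real n)^2})"
proof -
  define r where "r = 1 / (real n)^2"
  have r0: "r > 0" using n by (simp add: r_def)
  have "ghat tau Y W Z n \<theta> \<omega> - gt n \<omega> \<theta> = (1 / real n) *\<^sub>R (\<Sum>i<n.
      ((if Y i \<omega> \<le> W i \<omega> \<bullet> \<theta> then 1 else 0) - psi r (W i \<omega> \<bullet> \<theta> - Y i \<omega>)) *\<^sub>R Z i \<omega>)"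
    unfolding ghat_def gt_def r_def
    by (simp add: scaleR_diff_right[symmetric] sum_subtractf[symmetric] scaleR_diff_left[symmetric])
  then have "norm (ghat tau Y W Z n \<theta> \<omega> - gt n \<omega> \<theta>) = (1 / real n) * norm (\<Sum>i<n.
      ((if Y i \<omega> \<le> W i \<omega> \<bullet> \<theta> then 1 else 0) - psi r (W i \<omega> \<bullet> \<theta> - Y i \<omega>)) *\<^sub>R Z i \<omega>)"
    by simp
  also have "\<dots> \<le> (1 / real n) * (\<Sum>i<n. (if \<bar>Y i \<omega> - W i \<omega> \<bullet> \<theta>\<bar> < r then 1 else 0) * m)"
  proof (rule mult_left_mono)
    show "norm (\<Sum>i<n. ((if Y i \<omega> \<le> W i \<omega> \<bullet> \<theta> then 1 else 0) - psi r (W i \<omega> \<bullet> \<theta> - Y i \<omega>)) *\<^sub>R Z i \<omega>)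
      \<le> (\<Sum>i<n. (if \<bar>Y i \<omega> - W i \<omega> \<bullet> \<theta>\<bar> < r then 1 else 0) * m)"
    proof (rule order_trans[OF norm_sum sum_mono])
      fix i
      have "norm (((if Y i \<omega> \<le> W i \<omega> \<bullet> \<theta> then 1 else 0) - psi r (W i \<omega> \<bullet> \<theta> - Y i \<omega>)) *\<^sub>R Z i \<omega>)
         = \<bar>(if Y i \<omega> \<le> W i \<omega> \<bullet> \<theta> then 1 else 0) - psi r (W i \<omega> \<bullet> \<theta> - Y i \<omega>)\<bar> * norm (Z i \<omega>)"
        by simp
      also have "\<dots> \<le> (if \<bar>Y i \<omega> - W i \<omega> \<bullet> \<theta>\<bar> < r then 1 else 0) * m"
        using psi_ind[OF r0, of "Y i \<omega>" "W i \<omega> \<bullet> \<theta>"] Nall_bnd[OF om, of i]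
        by (intro mult_mono) auto
      finally show "norm (((if Y i \<omega> \<le> W i \<omega> \<bullet> \<theta> then 1 else 0) - psi r (W i \<omega> \<bullet> \<theta> - Y i \<omega>)) *\<^sub>R Z i \<omega>)
         \<le> (if \<bar>Y i \<omega> - W i \<omega> \<bullet> \<theta>\<bar> < r then 1 else 0) * m" .
    qed
  qed simp
  also have "\<dots> = m / real n * real (card {i\<in>{..<n}. \<bar>Y i \<omega> - W i \<omega> \<bullet> \<theta>\<bar> < r})"
    by (simp add: sum_distrib_right[symmetric] sum_if_card)
  finally show ?thesis by (simp add: r_def)
qed

lemma ghat_diff:
  assumes om: "\<omega> \<in> space M - Nall" and n: "n > 0" and d: "norm (\<theta> - g) \<le> \<delta>"
  shows "norm (ghat tau Y W Z n \<theta> \<omega> - ghat tau Y W Z n g \<omega>)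
     \<le> m / real n * real (card {i\<in>{..<n}. \<bar>Y i \<omega> - W i \<omega> \<bullet> g\<bar> \<le> m * \<delta>})"
proof -
  have "ghat tau Y W Z n \<theta> \<omega> - ghat tau Y W Z n g \<omega> = (1 / real n) *\<^sub>R (\<Sum>i<n.
      ((if Y i \<omega> \<le> W i \<omega> \<bullet> \<theta> then 1 else 0) - (if Y i \<omega> \<le> W i \<omega> \<bullet> g then 1 else 0)) *\<^sub>R Z i \<omega>)"
    unfolding ghat_def
    by (simp add: scaleR_diff_right[symmetric] sum_subtractf[symmetric] scaleR_diff_left[symmetric])
  then have "norm (ghat tau Y W Z n \<theta> \<omega> - ghat tau Y W Z n g \<omega>) = (1 / real n) * norm (\<Sum>i<n.
      ((if Y i \<omega> \<le> W i \<omega> \<bullet> \<theta> then 1 else 0) - (if Y i \<omega> \<le> W i \<omega> \<bullet> g then 1 else 0 :: real)) *\<^sub>R Z i \<omega>)"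
    by simp
  also have "\<dots> \<le> (1 / real n) * (\<Sum>i<n. (if \<bar>Y i \<omega> - W i \<omega> \<bullet> g\<bar> \<le> m * \<delta> then 1 else 0) * m)"
  proof (rule mult_left_mono)
    show "norm (\<Sum>i<n. ((if Y i \<omega> \<le> W i \<omega> \<bullet> \<theta> then 1 else 0) - (if Y i \<omega> \<le> W i \<omega> \<bullet> g then 1 else 0 :: real)) *\<^sub>R Z i \<omega>)
      \<le> (\<Sum>i<n. (if \<bar>Y i \<omega> - W i \<omega> \<bullet> g\<bar> \<le> m * \<delta> then 1 else 0) * m)"
    proof (rule order_trans[OF norm_sum sum_mono])
      fix i
      have "norm (((if Y i \<omega> \<le> W i \<omega> \<bullet> \<theta> then 1 else 0) - (if Y i \<omega> \<le> W i \<omega> \<bullet> g then 1 else 0 :: real)) *\<^sub>R Z i \<omega>)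
         = \<bar>(if Y i \<omega> \<le> W i \<omega> \<bullet> \<theta> then 1 else 0) - (if Y i \<omega> \<le> W i \<omega> \<bullet> g then 1 else 0 :: real)\<bar> * norm (Z i \<omega>)"
        by simp
      also have "\<dots> \<le> (if \<bar>Y i \<omega> - W i \<omega> \<bullet> g\<bar> \<le> m * \<delta> then 1 else 0) * m"
        using ind_diff[of "W i \<omega>" m \<theta> g \<delta> "Y i \<omega>"] Nall_bnd[OF om, of i] d
        by (intro mult_mono) auto
      finally show "norm (((if Y i \<omega> \<le> W i \<omega> \<bullet> \<theta> then 1 else 0) - (if Y i \<omega> \<le> W i \<omega> \<bullet> g then 1 else 0 :: real)) *\<^sub>R Z i \<omega>)
         \<le> (if \<bar>Y i \<omega> - W i \<omega> \<bullet> g\<bar> \<le> m * \<delta> then 1 else 0) * m" .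
    qed
  qed simp
  also have "\<dots> = m / real n * real (card {i\<in>{..<n}. \<bar>Y i \<omega> - W i \<omega> \<bullet> g\<bar> \<le> m * \<delta>})"
    by (simp add: sum_distrib_right[symmetric] sum_if_card)
  finally show ?thesis .
qed

definition hcomp :: "real^'k \<Rightarrow> 'k \<Rightarrow> real \<times> (real^'k) \<times> (real^'k) \<Rightarrow> real" where
  "hcomp g l t = ((if fst t \<le> fst (snd t) \<bullet> g then 1 else 0) - tau) * snd (snd t) $ l"

lemma hcomp_meas[measurable]: "hcomp g l \<in> borel_measurable borel"
  unfolding borel_prod[symmetric] hcomp_def by measurable

lemma ghat_comp: "ghat tau Y W Z n g \<omega> $ l = (\<Sum>i\<in>{..<n}. hcomp g l (T i \<omega>)) / real n"
  unfolding ghat_def hcomp_def T_def by (simp add: sum_divide_distrib)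

lemma gp_comp: "gp g $ l = expectation (\<lambda>\<omega>. hcomp g l (T 0 \<omega>))"
proof -
  have "gp g $ l = integral\<^sup>L M (\<lambda>\<omega>. F g \<omega> $ l)"
    unfolding gp_F using integral_bounded_linear[OF bounded_linear_vec_nth[of l] F_int[of g]] by simp
  also have "\<dots> = expectation (\<lambda>\<omega>. hcomp g l (T 0 \<omega>))"
    unfolding F_def hcomp_def T_def by simp
  finally show ?thesis .
qed

lemma hcomp_bnd: "AE \<omega> in M. hcomp g l (T 0 \<omega>) \<in> {-m..m}"
  using bndZ
proof eventually_elim
  case (elim \<omega>)
  have "\<bar>hcomp g l (T 0 \<omega>)\<bar> = \<bar>(if Y 0 \<omega> \<le> W 0 \<omega> \<bullet> g then 1 else 0) - tau\<bar> * \<bar>Z 0 \<omega> $ l\<bar>"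
    by (simp add: hcomp_def T_def abs_mult)
  also have "\<dots> \<le> 1 * m"
    using ind_tau component_le_norm_cart[of "Z 0 \<omega>" l] elim by (intro mult_mono) auto
  finally show ?case by auto
qed

definition ccount :: "real^'k \<Rightarrow> real \<Rightarrow> real \<times> (real^'k) \<times> (real^'k) \<Rightarrow> real" where
  "ccount g d t = (if \<bar>fst t - fst (snd t) \<bullet> g\<bar> \<le> d then 1 else 0)"

lemma ccount_meas[measurable]: "ccount g d \<in> borel_measurable borel"
  unfolding borel_prod[symmetric] ccount_def by measurable

lemma ccount_sum: "(\<Sum>i\<in>{..<n}. ccount g d (T i \<omega>)) = real (card {i\<in>{..<n}. \<bar>Y i \<omega> - W i \<omega> \<bullet> g\<bar> \<le> d})"
  unfolding ccount_def T_def by (simp add: sum_if_card)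

lemma ccount_exp: "d > 0 \<Longrightarrow> expectation (\<lambda>\<omega>. ccount g d (T 0 \<omega>)) \<le> 3 * fb * d"
  unfolding ccount_def T_def using dens[of d g] by (simp add: integral_if)

end

lemma exp_neg_le_inv: "(x::real) > 0 \<Longrightarrow> exp (- x) \<le> 1 / x"
proof -
  assume x: "x > 0"
  have "x \<le> exp x" using exp_ge_add_one_self[of x] by linarith
  then have "exp (-x) * x \<le> exp (-x) * exp x" by (intro mult_left_mono) auto
  then have "exp (-x) * x \<le> 1" by (simp add: exp_minus field_simps)
  then show ?thesis using x by (simp add: field_simps)
qed

lemma norm3:
  fixes x y u z :: "'b::real_normed_vector"
  shows "norm (x - z) \<le> norm (x - y) + norm (y - u) + norm (u - z)"
proof -
  have "norm (x - z) \<le> norm (x - u) + norm (u - z)" using norm_triangle_ineq[of "x - u" "u - z"] by simp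
  moreover have "norm (x - u) \<le> norm (x - y) + norm (y - u)" using norm_triangle_ineq[of "x - y" "y - u"] by simp
  ultimately show ?thesis by linarith
qed

context qrm begin

lemma ulln:
  fixes \<theta>0 :: "real^'k"
  assumes \<rho>: "\<rho> > 0" and \<eta>: "\<eta> > 0" and \<epsilon>: "\<epsilon> > 0"
  shows "\<exists>N. \<forall>n\<ge>N. \<exists>B\<in>sets M. prob B < \<epsilon> \<and> Nall \<subseteq> B \<and>
     (\<forall>\<omega>\<in>space M - B. \<forall>\<theta>\<in>cball \<theta>0 \<rho>. norm (ghat tau Y W Z n \<theta> \<omega> - gp \<theta>) \<le> \<eta>)"
proof -
  define k where "k = real CARD('k)"
  have k1: "k \<ge> 1" by (simp add: k_def)
  define \<delta>0 where "\<delta>0 = \<eta> / (12 * (fb + 1) * m^2)"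
  define Qm where "Qm = m + k"
  have Qm0: "Qm > 0" using m0 k1 by (simp add: Qm_def)
  define \<eta>1 where "\<eta>1 = \<eta> / (2 * Qm)"
  have d0: "\<delta>0 > 0" using \<eta> fb0 m0 by (simp add: \<delta>0_def)
  have e1: "\<eta>1 > 0" using \<eta> Qm0 by (simp add: \<eta>1_def)
  obtain G0 where G0fin: "finite G0" and G0cov: "\<forall>\<theta>\<in>cball \<theta>0 \<rho>. \<exists>g\<in>G0. norm (\<theta> - g) \<le> \<delta>0"
    using grid_exists[OF d0 \<rho>, of \<theta>0] by blast
  define c where "c = 2 * \<eta>1^2 / (4 * m^2 + 1)"
  have c0: "c > 0"
  proof -
    have "4 * m^2 + 1 > 0" by (simp add: add_nonneg_pos)
    then show ?thesis using e1 unfolding c_def by (intro divide_pos_pos) auto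
  qed
  define D where "D = 2 * real (card G0) * (1 + k)"
  have D0: "D \<ge> 0" using k1 by (simp add: D_def)
  define N where "N = nat \<lceil>D / (c * \<epsilon>)\<rceil> + 1"
  show ?thesis
  proof (intro exI[of _ N] allI impI)
    fix n assume nN: "N \<le> n"
    then have n0: "n > 0" by (simp add: N_def)
    have nD: "real n > D / (c * \<epsilon>)"
    proof -
      have "D / (c * \<epsilon>) \<le> real (nat \<lceil>D / (c * \<epsilon>)\<rceil>)" by linarith
      also have "\<dots> < real N" by (simp add: N_def)
      also have "\<dots> \<le> real n" using nN by simp
      finally show ?thesis .
    qed
    define e where "e = exp (- c * real n)"
    define Hh where "Hh = (\<lambda>g l. {\<omega>\<in>space M. \<eta>1 \<le> \<bar>(\<Sum>i\<in>{..<n}. hcomp g l (T i \<omega>)) / real n - expectation (\<lambda>\<omega>. hcomp g l (T 0 \<omega>))\<bar>})"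
    define Hc where "Hc = (\<lambda>g. {\<omega>\<in>space M. \<eta>1 \<le> \<bar>(\<Sum>i\<in>{..<n}. ccount g (m*\<delta>0) (T i \<omega>)) / real n - expectation (\<lambda>\<omega>. ccount g (m*\<delta>0) (T 0 \<omega>))\<bar>})"
    define B where "B = Nall \<union> (\<Union>g\<in>G0. Hc g \<union> (\<Union>l. Hh g l))"
    have Hh_sets: "Hh g l \<in> sets M" for g l unfolding Hh_def by measurable
    have Hc_sets: "Hc g \<in> sets M" for g unfolding Hc_def by measurable
    have HU_sets: "(\<Union>l. Hh g l) \<in> sets M" for g using Hh_sets by auto
    have B_sets: "B \<in> sets M"
      unfolding B_def using Nall_sets HU_sets Hh_sets Hc_sets G0fin by (intro sets.Un sets.finite_UN) auto
    have ebound: "exp (-2 * real n * \<eta>1\<^sup>2 / (b - a)\<^sup>2) \<le> e"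
      if ab: "0 < (b - a)^2" "(b - a)^2 \<le> 4 * m^2 + 1" for a b :: real
    proof -
      have "c * real n \<le> 2 * \<eta>1^2 / (b - a)^2 * real n"
      proof -
        have "2 * \<eta>1^2 / (4 * m^2 + 1) \<le> 2 * \<eta>1^2 / (b - a)^2"
        proof (rule divide_left_mono)
          show "(b - a)^2 \<le> 4 * m^2 + 1" by (rule ab(2))
          show "0 \<le> 2 * \<eta>1^2" by simp
          show "0 < (4 * m^2 + 1) * (b - a)^2" using ab(1) by (intro mult_pos_pos) (auto simp: add_nonneg_pos)
        qed
        then show ?thesis unfolding c_def by (rule mult_right_mono) simp
      qed
      moreover have "-2 * real n * \<eta>1\<^sup>2 / (b - a)\<^sup>2 = - (2 * \<eta>1^2 / (b - a)^2 * real n)"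
        by simp
      ultimately show ?thesis unfolding e_def by (simp add: mult_ac)
    qed
    have pHh: "prob (Hh g l) \<le> 2 * e" for g l
    proof -
      have "prob (Hh g l) \<le> 2 * exp (-2 * real n * \<eta>1\<^sup>2 / (m - (-m))\<^sup>2)"
        unfolding Hh_def using m0 e1 n0 by (intro hoeff[OF hcomp_meas hcomp_bnd]) auto
      also have "\<dots> \<le> 2 * e" using ebound[of "-m" m] m0 by (simp add: power2_eq_square)
      finally show ?thesis .
    qed
    have pHc: "prob (Hc g) \<le> 2 * e" for g
    proof -
      have "prob (Hc g) \<le> 2 * exp (-2 * real n * \<eta>1\<^sup>2 / (1 - 0)\<^sup>2)"
        unfolding Hc_def using e1 n0 by (intro hoeff[OF ccount_meas]) (auto simp: ccount_def)
      also have "\<dots> \<le> 2 * e" using ebound[of 0 1] by simp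
      finally show ?thesis .
    qed
    have "prob B \<le> prob Nall + prob (\<Union>g\<in>G0. Hc g \<union> (\<Union>l. Hh g l))"
      unfolding B_def using Nall_sets Hh_sets Hc_sets G0fin by (intro measure_Un_le) auto
    also have "\<dots> \<le> (\<Sum>g\<in>G0. prob (Hc g \<union> (\<Union>l. Hh g l)))"
      using Nall_prob G0fin Hc_sets HU_sets by (simp add: finite_measure_subadditive_finite image_subset_iff)
    also have "\<dots> \<le> (\<Sum>g\<in>G0. 2 * e * (1 + k))"
    proof (rule sum_mono)
      fix g
      have "prob (Hc g \<union> (\<Union>l. Hh g l)) \<le> prob (Hc g) + prob (\<Union>l. Hh g l)"
        using Hc_sets HU_sets by (intro measure_Un_le) auto
      also have "\<dots> \<le> 2 * e + (\<Sum>l\<in>UNIV. prob (Hh g l))"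
        using pHc[of g] Hh_sets by (intro add_mono finite_measure_subadditive_finite) auto
      also have "\<dots> \<le> 2 * e + (\<Sum>l\<in>(UNIV::'k set). 2 * e)"
        using pHh by (intro add_mono sum_mono) auto
      also have "\<dots> = 2 * e * (1 + k)" by (simp add: k_def algebra_simps)
      finally show "prob (Hc g \<union> (\<Union>l. Hh g l)) \<le> 2 * e * (1 + k)" .
    qed
    also have "\<dots> = D * e" by (simp add: D_def)
    also have "\<dots> \<le> D * (1 / (c * real n))"
      unfolding e_def using exp_neg_le_inv[of "c * real n"] c0 n0 D0 by (intro mult_left_mono) auto
    also have "\<dots> < \<epsilon>"
    proof -
      have "D < c * \<epsilon> * real n" using nD c0 \<epsilon> by (simp add: field_simps)
      then show ?thesis using c0 n0 \<epsilon> by (simp add: field_simps)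
    qed
    finally have pB: "prob B < \<epsilon>" .
    have good: "norm (ghat tau Y W Z n \<theta> \<omega> - gp \<theta>) \<le> \<eta>"
      if om: "\<omega> \<in> space M - B" and th: "\<theta> \<in> cball \<theta>0 \<rho>" for \<omega> \<theta>
    proof -
      obtain g where gG: "g \<in> G0" and tg: "norm (\<theta> - g) \<le> \<delta>0" using G0cov th by blast
      have om': "\<omega> \<in> space M - Nall" using om by (auto simp: B_def)
      have nHc: "\<omega> \<notin> Hc g" and nHh: "\<And>l. \<omega> \<notin> Hh g l" using om gG by (auto simp: B_def)
      have A1: "norm (ghat tau Y W Z n \<theta> \<omega> - ghat tau Y W Z n g \<omega>) \<le> m * (3 * fb * (m * \<delta>0) + \<eta>1)"
      proof -
        have "norm (ghat tau Y W Z n \<theta> \<omega> - ghat tau Y W Z n g \<omega>)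
            \<le> m / real n * real (card {i\<in>{..<n}. \<bar>Y i \<omega> - W i \<omega> \<bullet> g\<bar> \<le> m * \<delta>0})"
          by (rule ghat_diff[OF om' n0 tg])
        also have "\<dots> = m * ((\<Sum>i\<in>{..<n}. ccount g (m*\<delta>0) (T i \<omega>)) / real n)"
          by (simp add: ccount_sum)
        also have "\<dots> \<le> m * (3 * fb * (m * \<delta>0) + \<eta>1)"
        proof (rule mult_left_mono)
          have "(\<Sum>i\<in>{..<n}. ccount g (m*\<delta>0) (T i \<omega>)) / real n < expectation (\<lambda>\<omega>. ccount g (m*\<delta>0) (T 0 \<omega>)) + \<eta>1"
            using nHc om by (auto simp: Hc_def)
          moreover have "expectation (\<lambda>\<omega>. ccount g (m*\<delta>0) (T 0 \<omega>)) \<le> 3 * fb * (m * \<delta>0)"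
            using m0 d0 by (intro ccount_exp) auto
          ultimately show "(\<Sum>i\<in>{..<n}. ccount g (m*\<delta>0) (T i \<omega>)) / real n \<le> 3 * fb * (m * \<delta>0) + \<eta>1"
            by linarith
        qed (use m0 in simp)
        finally show ?thesis .
      qed
      have A2: "norm (ghat tau Y W Z n g \<omega> - gp g) \<le> k * \<eta>1"
      proof -
        have "norm (ghat tau Y W Z n g \<omega> - gp g) \<le> (\<Sum>l\<in>UNIV. \<bar>(ghat tau Y W Z n g \<omega> - gp g) $ l\<bar>)"
          by (rule norm_le_l1_cart)
        also have "\<dots> \<le> (\<Sum>l\<in>(UNIV::'k set). \<eta>1)"
        proof (rule sum_mono)
          fix l
          have "\<bar>(ghat tau Y W Z n g \<omega> - gp g) $ l\<bar>
              = \<bar>(\<Sum>i\<in>{..<n}. hcomp g l (T i \<omega>)) / real n - expectation (\<lambda>\<omega>. hcomp g l (T 0 \<omega>))\<bar>"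
            by (simp add: ghat_comp gp_comp)
          also have "\<dots> < \<eta>1" using nHh[of l] om by (auto simp: Hh_def)
          finally show "\<bar>(ghat tau Y W Z n g \<omega> - gp g) $ l\<bar> \<le> \<eta>1" by simp
        qed
        also have "\<dots> = k * \<eta>1" by (simp add: k_def)
        finally show ?thesis .
      qed
      have A3: "norm (gp g - gp \<theta>) \<le> m * (3 * fb * (m * \<delta>0))"
        using gp_lip[of g \<theta> \<delta>0] tg d0 by (simp add: norm_minus_commute)
      have "norm (ghat tau Y W Z n \<theta> \<omega> - gp \<theta>)
          \<le> norm (ghat tau Y W Z n \<theta> \<omega> - ghat tau Y W Z n g \<omega>) + norm (ghat tau Y W Z n g \<omega> - gp g) + norm (gp g - gp \<theta>)"
        by (rule norm3)
      also have "\<dots> \<le> m * (3 * fb * (m * \<delta>0) + \<eta>1) + k * \<eta>1 + m * (3 * fb * (m * \<delta>0))"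
        using A1 A2 A3 by linarith
      also have "\<dots> = 6 * fb * m^2 * \<delta>0 + (m + k) * \<eta>1" by (simp add: algebra_simps power2_eq_square)
      also have "\<dots> \<le> \<eta> / 2 + \<eta> / 2"
      proof (rule add_mono)
        define P where "P = (fb + 1) * m^2"
        have P0: "P > 0" using fb0 m0 by (simp add: P_def add_nonneg_pos)
        have "6 * fb * m^2 * \<delta>0 \<le> 6 * P * \<delta>0"
          using d0 m0 by (intro mult_right_mono) (auto simp: P_def algebra_simps)
        also have "\<dots> = \<eta> / 2"
        proof -
          have "\<delta>0 = \<eta> / (12 * P)" by (simp add: \<delta>0_def P_def mult.assoc)
          then show ?thesis using P0 by simp
        qed
        finally show "6 * fb * m^2 * \<delta>0 \<le> \<eta> / 2" .
        have "(m + k) * \<eta>1 = Qm * \<eta>1" by (simp add: Qm_def)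
        also have "\<dots> = \<eta> / 2" using Qm0 unfolding \<eta>1_def by (simp add: field_simps)
        finally show "(m + k) * \<eta>1 \<le> \<eta> / 2" by simp
      qed
      finally show ?thesis by simp
    qed
    show "\<exists>B\<in>sets M. prob B < \<epsilon> \<and> Nall \<subseteq> B \<and>
      (\<forall>\<omega>\<in>space M - B. \<forall>\<theta>\<in>cball \<theta>0 \<rho>. norm (ghat tau Y W Z n \<theta> \<omega> - gp \<theta>) \<le> \<eta>)"
      using B_sets pB good by (intro bexI[of _ B]) (auto simp: B_def)
  qed
qed

end

context qrm begin

lemma cnt:
  fixes \<theta>0 :: "real^'k"
  assumes \<rho>: "\<rho> > 0" and \<epsilon>: "\<epsilon> > 0"
  shows "\<exists>N. \<forall>n\<ge>N. \<exists>B\<in>sets M. prob B < \<epsilon> \<and> Nall \<subseteq> B \<and>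
     (\<forall>\<omega>\<in>space M - B. \<forall>\<theta>\<in>cball \<theta>0 \<rho>.
        card {i\<in>{..<n}. \<bar>Y i \<omega> - W i \<omega> \<bullet> \<theta>\<bar> < 1 / (real n)^2} \<le> 2 * CARD('k))"
proof -
  define k where "k = CARD('k)"
  define K where "K = 2 * k + 1"
  define c1 where "c1 = 2 * \<rho> * real k * m + 3"
  have c1: "c1 \<ge> 0" using \<rho> m0 by (simp add: c1_def)
  define D where "D = c1 ^ k * (6 * fb) ^ K"
  have D0: "D \<ge> 0" using c1 fb0 by (simp add: D_def)
  define N where "N = nat \<lceil>D / \<epsilon>\<rceil> + 1"
  show ?thesis
  proof (intro exI[of _ N] allI impI)
    fix n assume nN: "N \<le> n"
    then have n0: "n > 0" by (simp add: N_def)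
    have nD: "real n > D / \<epsilon>"
    proof -
      have "D / \<epsilon> \<le> real (nat \<lceil>D / \<epsilon>\<rceil>)" by linarith
      also have "\<dots> < real N" by (simp add: N_def)
      also have "\<dots> \<le> real n" using nN by simp
      finally show ?thesis .
    qed
    define x where "x = real n"
    have x1: "x \<ge> 1" using n0 by (simp add: x_def)
    define r where "r = 1 / x^2"
    have r0: "r > 0" using x1 by (simp add: r_def)
    have rm: "r / m > 0" using r0 m0 by simp
    obtain Gn where Gfin: "finite Gn"
      and Gcard: "real (card Gn) \<le> (2 * (\<rho> * real k / (r / m)) + 3) ^ k"
      and Gcov: "\<forall>\<theta>\<in>cball \<theta>0 \<rho>. \<exists>g\<in>Gn. norm (\<theta> - g) \<le> r / m"
      using grid_exists[OF rm \<rho>, of \<theta>0] unfolding k_def by blast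
    define S where "S = (\<lambda>g::real^'k. {t::real \<times> (real^'k) \<times> (real^'k). \<bar>fst t - fst (snd t) \<bullet> g\<bar> \<le> 2 * r})"
    have S_sets: "S g \<in> sets borel" for g
    proof -
      have "closed (S g)" unfolding S_def by (intro closed_Collect_le continuous_intros)
      then show ?thesis by (rule borel_closed)
    qed
    define q where "q = 6 * fb * r"
    have q0: "q \<ge> 0" using fb0 r0 by (simp add: q_def)
    have pS: "prob {\<omega>\<in>space M. T 0 \<omega> \<in> S g} \<le> q" for g
    proof -
      have "{\<omega>\<in>space M. T 0 \<omega> \<in> S g} = {\<omega>\<in>space M. \<bar>Y 0 \<omega> - W 0 \<omega> \<bullet> g\<bar> \<le> 2 * r}"
        by (auto simp: S_def T_def)
      then show ?thesis using dens[of "2 * r" g] r0 by (simp add: q_def)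
    qed
    have K0: "K > 0" by (simp add: K_def)
    define Pr where "Pr = (\<lambda>g V. V \<in> sets M \<and> {\<omega>\<in>space M. K \<le> card {i\<in>{..<n}. T i \<omega> \<in> S g}} \<subseteq> V \<and> prob V \<le> real n ^ K * q ^ K)"
    have "\<exists>V. Pr g V" for g
      using count_bound[OF S_sets[of g] pS[of g] K0, where n=n] unfolding Pr_def Bex_def .
    then have "\<forall>g. \<exists>V. Pr g V" by (rule allI)
    from choice[OF this] obtain U where UP: "\<And>g. Pr g (U g)" by blast
    have U: "\<And>g. U g \<in> sets M"
      "\<And>g. {\<omega>\<in>space M. K \<le> card {i\<in>{..<n}. T i \<omega> \<in> S g}} \<subseteq> U g"
      "\<And>g. prob (U g) \<le> real n ^ K * q ^ K"
      using UP unfolding Pr_def by auto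
    define B where "B = Nall \<union> (\<Union>g\<in>Gn. U g)"
    have B_sets: "B \<in> sets M" unfolding B_def using Nall_sets U(1) Gfin by auto
    have "prob B \<le> prob Nall + prob (\<Union>g\<in>Gn. U g)"
      unfolding B_def using Nall_sets U(1) Gfin by (intro measure_Un_le) auto
    also have "\<dots> \<le> (\<Sum>g\<in>Gn. prob (U g))"
      using Nall_prob Gfin U(1) by (simp add: finite_measure_subadditive_finite image_subset_iff)
    also have "\<dots> \<le> (\<Sum>g\<in>Gn. real n ^ K * q ^ K)" using U(3) by (intro sum_mono) auto
    also have "\<dots> = real (card Gn) * (x ^ K * q ^ K)" by (simp add: x_def)
    also have "\<dots> \<le> (c1 * x^2) ^ k * (x ^ K * q ^ K)"
    proof (rule mult_right_mono)
      have "2 * (\<rho> * real k / (r / m)) + 3 = 2 * \<rho> * real k * m * x^2 + 3"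
        using m0 x1 by (simp add: r_def field_simps)
      also have "\<dots> \<le> c1 * x^2"
      proof -
        have "3 \<le> 3 * x^2" using x1 by (simp add: one_le_power)
        then show ?thesis by (simp add: c1_def algebra_simps)
      qed
      finally have "2 * (\<rho> * real k / (r / m)) + 3 \<le> c1 * x^2" .
      moreover have "0 \<le> 2 * (\<rho> * real k / (r / m)) + 3"
      proof -
        have "0 \<le> \<rho> * real k / (r / m)" using \<rho> rm by (intro divide_nonneg_pos) auto
        then show ?thesis by linarith
      qed
      ultimately have "(2 * (\<rho> * real k / (r / m)) + 3) ^ k \<le> (c1 * x^2) ^ k" by (rule power_mono)
      then show "real (card Gn) \<le> (c1 * x^2) ^ k" using Gcard by linarith
    qed (use q0 x1 in simp)
    also have "\<dots> = D / x"
    proof -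
      have xK: "x ^ (2 * K) = x ^ (2 * k) * x ^ K * x" by (simp add: K_def power_add[symmetric])
      have "(c1 * x^2) ^ k * (x ^ K * q ^ K) = c1 ^ k * (6 * fb) ^ K * (x ^ (2 * k) * x ^ K / x ^ (2 * K))"
        by (simp add: q_def r_def power_mult_distrib power_divide power_mult[symmetric] mult_ac)
      also have "x ^ (2 * k) * x ^ K / x ^ (2 * K) = 1 / x"
        using x1 by (simp add: xK)
      finally show ?thesis by (simp add: D_def)
    qed
    also have "\<dots> < \<epsilon>"
    proof -
      have "D < \<epsilon> * x" using nD \<epsilon> by (simp add: x_def field_simps)
      then show ?thesis using x1 \<epsilon> by (simp add: field_simps)
    qed
    finally have pB: "prob B < \<epsilon>" .
    have good: "card {i\<in>{..<n}. \<bar>Y i \<omega> - W i \<omega> \<bullet> \<theta>\<bar> < 1 / (real n)^2} \<le> 2 * CARD('k)"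
      if om: "\<omega> \<in> space M - B" and th: "\<theta> \<in> cball \<theta>0 \<rho>" for \<omega> \<theta>
    proof -
      obtain g where gG: "g \<in> Gn" and tg: "norm (\<theta> - g) \<le> r / m" using Gcov th by blast
      have om': "\<omega> \<in> space M - Nall" using om by (auto simp: B_def)
      have nU: "\<omega> \<notin> U g" using om gG by (auto simp: B_def)
      have sub: "{i\<in>{..<n}. \<bar>Y i \<omega> - W i \<omega> \<bullet> \<theta>\<bar> < 1 / (real n)^2} \<subseteq> {i\<in>{..<n}. T i \<omega> \<in> S g}"
      proof safe
        fix i assume i: "i < n" "\<bar>Y i \<omega> - W i \<omega> \<bullet> \<theta>\<bar> < 1 / (real n)^2"
        have "\<bar>W i \<omega> \<bullet> \<theta> - W i \<omega> \<bullet> g\<bar> = \<bar>W i \<omega> \<bullet> (\<theta> - g)\<bar>" by (simp add: inner_diff_right)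
        also have "\<dots> \<le> norm (W i \<omega>) * norm (\<theta> - g)" by (rule Cauchy_Schwarz_ineq2)
        also have "\<dots> \<le> m * (r / m)"
          using Nall_bnd[OF om', of i] tg m0 by (intro mult_mono) auto
        also have "\<dots> = r" using m0 by simp
        finally have "\<bar>W i \<omega> \<bullet> \<theta> - W i \<omega> \<bullet> g\<bar> \<le> r" .
        moreover have "\<bar>Y i \<omega> - W i \<omega> \<bullet> \<theta>\<bar> < r" using i by (simp add: r_def x_def)
        ultimately have "\<bar>Y i \<omega> - W i \<omega> \<bullet> g\<bar> \<le> 2 * r" by linarith
        then show "T i \<omega> \<in> S g" by (simp add: S_def T_def)
      qed
      have "\<not> K \<le> card {i\<in>{..<n}. T i \<omega> \<in> S g}" using U(2)[of g] nU om by auto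
      moreover have "card {i\<in>{..<n}. \<bar>Y i \<omega> - W i \<omega> \<bullet> \<theta>\<bar> < 1 / (real n)^2} \<le> card {i\<in>{..<n}. T i \<omega> \<in> S g}"
        by (rule card_mono[OF _ sub]) auto
      ultimately show ?thesis by (simp add: K_def k_def)
    qed
    show "\<exists>B\<in>sets M. prob B < \<epsilon> \<and> Nall \<subseteq> B \<and> (\<forall>\<omega>\<in>space M - B. \<forall>\<theta>\<in>cball \<theta>0 \<rho>.
        card {i\<in>{..<n}. \<bar>Y i \<omega> - W i \<omega> \<bullet> \<theta>\<bar> < 1 / (real n)^2} \<le> 2 * CARD('k))"
      using B_sets pB good by (intro bexI[of _ B]) (auto simp: B_def)
  qed
qed

end

context qrm begin

lemma good:
  fixes \<theta>0 :: "real^'k"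
  assumes \<rho>: "\<rho> > 0" and \<eta>: "\<eta> > 0" and \<epsilon>: "\<epsilon> > 0"
  shows "\<exists>N>0. \<forall>n\<ge>N. \<exists>B\<in>sets M. prob B < \<epsilon> \<and> (\<forall>\<omega>\<in>space M - B. \<forall>\<theta>\<in>cball \<theta>0 \<rho>.
      norm (gt n \<omega> \<theta> - gp \<theta>) \<le> \<eta> \<and> norm (ghat tau Y W Z n \<theta> \<omega> - gt n \<omega> \<theta>) \<le> 2 * real CARD('k) * m / real n)"
proof -
  have e2: "\<epsilon> / 2 > 0" "\<eta> / 2 > 0" using \<epsilon> \<eta> by auto
  obtain N1 where N1: "\<And>n. n \<ge> N1 \<Longrightarrow> \<exists>B\<in>sets M. prob B < \<epsilon>/2 \<and> Nall \<subseteq> B \<and>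
     (\<forall>\<omega>\<in>space M - B. \<forall>\<theta>\<in>cball \<theta>0 \<rho>. norm (ghat tau Y W Z n \<theta> \<omega> - gp \<theta>) \<le> \<eta>/2)"
    using ulln[OF \<rho> e2(2) e2(1), of \<theta>0] by blast
  obtain N2 where N2: "\<And>n. n \<ge> N2 \<Longrightarrow> \<exists>B\<in>sets M. prob B < \<epsilon>/2 \<and> Nall \<subseteq> B \<and>
     (\<forall>\<omega>\<in>space M - B. \<forall>\<theta>\<in>cball \<theta>0 \<rho>.
        card {i\<in>{..<n}. \<bar>Y i \<omega> - W i \<omega> \<bullet> \<theta>\<bar> < 1 / (real n)^2} \<le> 2 * CARD('k))"
    using cnt[OF \<rho> e2(1), of \<theta>0] by blast
  define k where "k = real CARD('k)"
  define N3 where "N3 = nat \<lceil>4 * k * m / \<eta>\<rceil> + 1"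
  define N where "N = max (max N1 N2) N3"
  have N0: "N > 0" by (simp add: N_def N3_def)
  show ?thesis
  proof (intro exI[of _ N] conjI allI impI N0)
    fix n assume nN: "N \<le> n"
    then have n0: "n > 0" using N0 by simp
    obtain B1 where B1: "B1 \<in> sets M" "prob B1 < \<epsilon>/2" "Nall \<subseteq> B1"
      "\<And>\<omega> \<theta>. \<omega> \<in> space M - B1 \<Longrightarrow> \<theta> \<in> cball \<theta>0 \<rho> \<Longrightarrow> norm (ghat tau Y W Z n \<theta> \<omega> - gp \<theta>) \<le> \<eta>/2"
      using N1[of n] nN by (auto simp: N_def)
    obtain B2 where B2: "B2 \<in> sets M" "prob B2 < \<epsilon>/2"
      "\<And>\<omega> \<theta>. \<omega> \<in> space M - B2 \<Longrightarrow> \<theta> \<in> cball \<theta>0 \<rho> \<Longrightarrow>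
        card {i\<in>{..<n}. \<bar>Y i \<omega> - W i \<omega> \<bullet> \<theta>\<bar> < 1 / (real n)^2} \<le> 2 * CARD('k)"
      using N2[of n] nN by (auto simp: N_def)
    have nk: "2 * k * m / real n \<le> \<eta> / 2"
    proof -
      have "4 * k * m / \<eta> \<le> real (nat \<lceil>4 * k * m / \<eta>\<rceil>)" by linarith
      also have "\<dots> \<le> real n"
      proof -
        have "N3 \<le> n" using nN unfolding N_def by simp
        then have "nat \<lceil>4 * k * m / \<eta>\<rceil> + 1 \<le> n" by (simp only: N3_def)
        then have "nat \<lceil>4 * k * m / \<eta>\<rceil> \<le> n" by linarith
        then show ?thesis by (simp only: of_nat_le_iff)
      qed
      finally have "4 * k * m \<le> real n * \<eta>" using \<eta> by (simp add: field_simps)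
      then show ?thesis using n0 by (simp add: field_simps)
    qed
    have gd: "norm (gt n \<omega> \<theta> - gp \<theta>) \<le> \<eta> \<and> norm (ghat tau Y W Z n \<theta> \<omega> - gt n \<omega> \<theta>) \<le> 2 * real CARD('k) * m / real n"
      if om: "\<omega> \<in> space M - (B1 \<union> B2)" and th: "\<theta> \<in> cball \<theta>0 \<rho>" for \<omega> \<theta>
    proof -
      have om': "\<omega> \<in> space M - Nall" using om B1(3) by auto
      have "norm (ghat tau Y W Z n \<theta> \<omega> - gt n \<omega> \<theta>)
          \<le> m / real n * real (card {i\<in>{..<n}. \<bar>Y i \<omega> - W i \<omega> \<bullet> \<theta>\<bar> < 1 / (real n)^2})"
        by (rule ghat_gt[OF om' n0])
      also have "\<dots> \<le> m / real n * real (2 * CARD('k))"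
        using B2(3)[of \<omega> \<theta>] om th m0 by (intro mult_left_mono) auto
      also have "\<dots> = 2 * k * m / real n" by (simp add: k_def)
      finally have h1: "norm (ghat tau Y W Z n \<theta> \<omega> - gt n \<omega> \<theta>) \<le> 2 * k * m / real n" .
      have h2: "norm (ghat tau Y W Z n \<theta> \<omega> - gp \<theta>) \<le> \<eta>/2" using B1(4)[of \<omega> \<theta>] om th by auto
      have "norm (gt n \<omega> \<theta> - gp \<theta>) \<le> norm (gt n \<omega> \<theta> - ghat tau Y W Z n \<theta> \<omega>) + norm (ghat tau Y W Z n \<theta> \<omega> - gp \<theta>)"
        using norm_triangle_ineq[of "gt n \<omega> \<theta> - ghat tau Y W Z n \<theta> \<omega>" "ghat tau Y W Z n \<theta> \<omega> - gp \<theta>"] by simp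
      also have "\<dots> \<le> \<eta>" using h1 h2 nk by (simp add: norm_minus_commute)
      finally show ?thesis using h1 by (simp add: k_def)
    qed
    have "prob (B1 \<union> B2) \<le> prob B1 + prob B2" using B1(1) B2(1) by (rule measure_Un_le)
    also have "\<dots> < \<epsilon>" using B1(2) B2(2) by simp
    finally show "\<exists>B\<in>sets M. prob B < \<epsilon> \<and> (\<forall>\<omega>\<in>space M - B. \<forall>\<theta>\<in>cball \<theta>0 \<rho>.
      norm (gt n \<omega> \<theta> - gp \<theta>) \<le> \<eta> \<and> norm (ghat tau Y W Z n \<theta> \<omega> - gt n \<omega> \<theta>) \<le> 2 * real CARD('k) * m / real n)"
      using gd B1(1) B2(1) by (intro bexI[of _ "B1 \<union> B2"]) auto
  qed
qed

end

theorem lemma12: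
  fixes M :: "'a measure"
    and Y :: "nat \<Rightarrow> 'a \<Rightarrow> real"
    and W Z :: "nat \<Rightarrow> 'a \<Rightarrow> real^'k"
    and tau :: real and \<Theta> :: "(real^'k) set" and \<theta>0 :: "real^'k"
    and G :: "real^'k^'k"
    and m fbar :: real and s :: nat and dirs :: "(real^'k) set"
    and f :: "real^'k \<Rightarrow> real^'k \<Rightarrow> real \<Rightarrow> real"
    and p :: ereal
    and \<theta>hat :: "nat \<Rightarrow> 'a \<Rightarrow> real^'k"
  assumes P: "prob_space M"
    and indep: "prob_space.indep_vars M (\<lambda>_. borel) (\<lambda>i \<omega>. (Y i \<omega>, W i \<omega>, Z i \<omega>)) UNIV"
    and ident: "\<And>i. distr M borel (\<lambda>\<omega>. (Y i \<omega>, W i \<omega>, Z i \<omega>)) = distr M borel (\<lambda>\<omega>. (Y 0 \<omega>, W 0 \<omega>, Z 0 \<omega>))"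
    and tau: "0 < tau" "tau < 1"
    \<comment> \<open>Assumption 1.1\<close>
    and cpt: "compact \<Theta>"
    and int: "\<theta>0 \<in> interior \<Theta>"
    and zero: "gpop M tau (Y 0) (W 0) (Z 0) \<theta>0 = 0"
    and uniq: "\<And>\<theta>. \<theta> \<in> \<Theta> \<Longrightarrow> gpop M tau (Y 0) (W 0) (Z 0) \<theta> = 0 \<Longrightarrow> \<theta> = \<theta>0"
    \<comment> \<open>Assumption 1.2\<close>
    and deriv: "(gpop M tau (Y 0) (W 0) (Z 0) has_derivative (\<lambda>h. G *v h)) (at \<theta>0)"
    and fullrank: "rank G = CARD('k)"
    \<comment> \<open>Assumption 2.1\<close>
    and bndZ: "AE \<omega> in M. norm (Z 0 \<omega>) < m"
    and bndW: "AE \<omega> in M. norm (W 0 \<omega>) < m"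
    \<comment> \<open>Assumption 2.2\<close>
    and dirs: "finite dirs" "card dirs = s"
    and Wdir: "AE \<omega> in M. norm (W 0 \<omega>) > 0 \<and> W 0 \<omega> /\<^sub>R norm (W 0 \<omega>) \<in> dirs"
    \<comment> \<open>Assumption 3.1: conditional density of Y given (W,Z)\<close>
    and f_meas: "(\<lambda>(w, z, y). f w z y) \<in> borel_measurable borel"
    and f_nonneg: "\<And>w z y. f w z y \<ge> 0"
    and f_dens: "\<And>A B. A \<in> sets borel \<Longrightarrow> B \<in> sets borel \<Longrightarrow>
        measure M {\<omega>\<in>space M. (W 0 \<omega>, Z 0 \<omega>) \<in> A \<and> Y 0 \<omega> \<in> B}
        = integral\<^sup>L M (\<lambda>\<omega>. indicator A (W 0 \<omega>, Z 0 \<omega>) * (LINT y:B|lborel. f (W 0 \<omega>) (Z 0 \<omega>) y))"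
    and f_bnd: "AE \<omega> in M. \<forall>y\<in>rv_support M (Y 0). f (W 0 \<omega>) (Z 0 \<omega>) y \<le> fbar"
    \<comment> \<open>Assumption 3.2\<close>
    and f_C2: "AE \<omega> in M. C2_on (rv_support M (Y 0)) (f (W 0 \<omega>) (Z 0 \<omega>))"
    \<comment> \<open>the estimator: measurable minimiser of the l_p norm of ghat over Theta\<close>
    and p: "1 \<le> p"
    and est_meas: "\<And>n. \<theta>hat n \<in> borel_measurable M"
    and est_in: "\<And>n \<omega>. \<omega> \<in> space M \<Longrightarrow> \<theta>hat n \<omega> \<in> \<Theta>"
    and est_min: "\<And>n \<omega> \<theta>. \<omega> \<in> space M \<Longrightarrow> \<theta> \<in> \<Theta> \<Longrightarrow>
        lp_norm p (ghat tau Y W Z n (\<theta>hat n \<omega>) \<omega>) \<le> lp_norm p (ghat tau Y W Z n \<theta> \<omega>)"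
  shows "\<exists>\<gamma>0>0. \<forall>\<gamma>. 0 < \<gamma> \<and> \<gamma> < \<gamma>0 \<longrightarrow>
     bigOp M (\<lambda>n \<omega>. ghat tau Y W Z n (\<theta>hat n \<omega>) \<omega>)
       (\<lambda>n. m ^ 3 * (real s) ^ 2 / (real n) powr (1 - \<gamma>))"
proof -
  interpret P: prob_space M by (rule P)
  have Ii: "iidm M Y W Z"
    by (rule iidm.intro[OF P iidm_axioms.intro[OF indep ident]])
  interpret I: iidm M Y W Z by (rule Ii)
  have m0: "m > 0"
  proof -
    have "AE \<omega> in M. 0 < m" using bndZ
    proof eventually_elim
      case (elim \<omega>) then show ?case using norm_ge_zero[of "Z 0 \<omega>"] by linarith
    qed
    then show ?thesis by simp
  qed
  have s1: "real s \<ge> 1"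
  proof -
    have "AE \<omega> in M. dirs \<noteq> {}" using Wdir by eventually_elim auto
    then have "dirs \<noteq> {}" by simp
    then have "card dirs \<ge> 1" using dirs(1) by (simp add: Suc_leI card_gt_0_iff)
    then show ?thesis using dirs(2) by simp
  qed
  have dens: "\<And>\<theta> \<delta>. \<delta> > 0 \<Longrightarrow> P.prob {\<omega>\<in>space M. \<bar>Y 0 \<omega> - W 0 \<omega> \<bullet> \<theta>\<bar> \<le> \<delta>} \<le> 3 * max fbar 0 * \<delta>"
    by (rule dens_bound[OF P I.Y_meas I.W_meas I.Z_meas bndW f_dens f_bnd])
  have Qi: "qrm M Y W Z m (max fbar 0) tau"
  proof (rule qrm.intro[OF Ii], rule qrm_axioms.intro)
    show "0 < m" by (rule m0)
    show "0 \<le> max fbar 0" by simp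
  qed (use tau bndZ bndW dens in auto)
  interpret Q: qrm M Y W Z m "max fbar 0" tau by (rule Qi)
  have injG: "inj ((*v) G)" using fullrank full_rank_injective by blast
  obtain A where AG: "A ** G = mat 1" using matrix_left_invertible_injective injG by blast
  have GA: "G ** A = mat 1" using AG matrix_left_right_inverse by blast
  have AGv: "A *v (G *v x) = x" for x by (simp add: matrix_vector_mul_assoc AG)
  have GAv: "G *v (A *v x) = x" for x by (simp add: matrix_vector_mul_assoc GA)
  have blA: "bounded_linear ((*v) A)"
    using linear_conv_bounded_linear matrix_vector_mul_linear by blast
  obtain LA where LA0: "LA > 0" and LA: "\<And>v. norm (A *v v) \<le> norm v * LA"
    using bounded_linear.pos_bounded[OF blA] by blast
  have e2: "1 / (2 * LA) > 0" using LA0 by simp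
  obtain d where d0: "d > 0" and dG: "\<And>y. norm (y - \<theta>0) < d \<Longrightarrow>
      norm (Q.gp y - Q.gp \<theta>0 - G *v (y - \<theta>0)) \<le> 1 / (2 * LA) * norm (y - \<theta>0)"
    using deriv e2 unfolding has_derivative_at_alt by metis
  obtain e1 where e10: "e1 > 0" and e1: "cball \<theta>0 e1 \<subseteq> \<Theta>"
    using int mem_interior_cball by blast
  define \<rho> where "\<rho> = min e1 (d / 2)"
  have \<rho>0: "\<rho> > 0" using e10 d0 by (simp add: \<rho>_def)
  have \<rho>\<Theta>: "cball \<theta>0 \<rho> \<subseteq> \<Theta>" using e1 by (auto simp: \<rho>_def)
  have \<rho>d: "\<rho> < d" using d0 by (simp add: \<rho>_def)
  define \<eta> where "\<eta> = \<rho> / (2 * LA)"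
  have \<eta>0: "\<eta> > 0" using \<rho>0 LA0 by (simp add: \<eta>_def)
  define k where "k = real CARD('k)"
  have k1: "k \<ge> 1" by (simp add: k_def)
  show ?thesis
  proof (intro exI[of _ 1] conjI allI impI)
    fix \<gamma> :: real assume \<gamma>: "0 < \<gamma> \<and> \<gamma> < 1"
    show "bigOp M (\<lambda>n \<omega>. ghat tau Y W Z n (\<theta>hat n \<omega>) \<omega>) (\<lambda>n. m ^ 3 * (real s) ^ 2 / (real n) powr (1 - \<gamma>))"
      unfolding bigOp_def
    proof (intro allI impI)
      fix \<epsilon> :: real assume \<epsilon>: "\<epsilon> > 0"
      obtain N where N0: "N > 0" and NB: "\<And>n. n \<ge> N \<Longrightarrow> \<exists>B\<in>sets M. P.prob B < \<epsilon> \<and> (\<forall>\<omega>\<in>space M - B. \<forall>\<theta>\<in>cball \<theta>0 \<rho>.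
          norm (Q.gt n \<omega> \<theta> - Q.gp \<theta>) \<le> \<eta> \<and> norm (ghat tau Y W Z n \<theta> \<omega> - Q.gt n \<omega> \<theta>) \<le> 2 * real CARD('k) * m / real n)"
        using Q.good[OF \<rho>0 \<eta>0 \<epsilon>, of \<theta>0] by blast
      define C where "C = 2 * k^3 / m^2 + 1"
      show "\<exists>C N. \<forall>n\<ge>N. measure M {\<omega>\<in>space M. norm (ghat tau Y W Z n (\<theta>hat n \<omega>) \<omega>) > C * (m ^ 3 * (real s) ^ 2 / (real n) powr (1 - \<gamma>))} < \<epsilon>"
      proof (intro exI[of _ C] exI[of _ N] allI impI)
        fix n assume nN: "N \<le> n"
        then have n0: "n > 0" using N0 by simp
        obtain B where B: "B \<in> sets M" "P.prob B < \<epsilon>"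
          and Bg: "\<And>\<omega> \<theta>. \<omega> \<in> space M - B \<Longrightarrow> \<theta> \<in> cball \<theta>0 \<rho> \<Longrightarrow>
             norm (Q.gt n \<omega> \<theta> - Q.gp \<theta>) \<le> \<eta> \<and> norm (ghat tau Y W Z n \<theta> \<omega> - Q.gt n \<omega> \<theta>) \<le> 2 * real CARD('k) * m / real n"
          using NB[OF nN] by blast
        have incl: "{\<omega>\<in>space M. norm (ghat tau Y W Z n (\<theta>hat n \<omega>) \<omega>) > C * (m ^ 3 * (real s) ^ 2 / (real n) powr (1 - \<gamma>))} \<subseteq> B"
        proof (rule subsetI, rule ccontr)
          fix \<omega> assume om1: "\<omega> \<in> {\<omega>\<in>space M. norm (ghat tau Y W Z n (\<theta>hat n \<omega>) \<omega>) > C * (m ^ 3 * (real s) ^ 2 / (real n) powr (1 - \<gamma>))}"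
            and nB: "\<omega> \<notin> B"
          have om: "\<omega> \<in> space M - B" using om1 nB by auto
          define \<Phi> where "\<Phi> = (\<lambda>\<theta>. \<theta> - A *v Q.gt n \<omega> \<theta>)"
          have cont: "continuous_on (cball \<theta>0 \<rho>) \<Phi>"
          proof -
            have "continuous_on (cball \<theta>0 \<rho>) ((*v) A \<circ> Q.gt n \<omega>)"
              by (rule continuous_on_compose[OF Q.gt_cont matrix_vector_mult_linear_continuous_on])
            then have "continuous_on (cball \<theta>0 \<rho>) (\<lambda>\<theta>. A *v Q.gt n \<omega> \<theta>)" by (simp add: o_def)
            then show ?thesis unfolding \<Phi>_def by (intro continuous_on_diff continuous_on_id)
          qed
          have maps: "\<Phi> \<in> cball \<theta>0 \<rho> \<rightarrow> cball \<theta>0 \<rho>"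
          proof
            fix \<theta> assume th: "\<theta> \<in> cball \<theta>0 \<rho>"
            have nt: "norm (\<theta> - \<theta>0) \<le> \<rho>" using th by (simp add: dist_norm norm_minus_commute)
            have eq: "\<Phi> \<theta> - \<theta>0 = A *v (G *v (\<theta> - \<theta>0) - Q.gp \<theta>) - A *v (Q.gt n \<omega> \<theta> - Q.gp \<theta>)"
              unfolding \<Phi>_def by (simp add: matrix_vector_mult_diff_distrib AGv)
            have t1: "norm (A *v (G *v (\<theta> - \<theta>0) - Q.gp \<theta>)) \<le> \<rho> / 2"
            proof -
              have "norm (A *v (G *v (\<theta> - \<theta>0) - Q.gp \<theta>)) \<le> norm (G *v (\<theta> - \<theta>0) - Q.gp \<theta>) * LA" by (rule LA)
              also have "norm (G *v (\<theta> - \<theta>0) - Q.gp \<theta>) = norm (Q.gp \<theta> - Q.gp \<theta>0 - G *v (\<theta> - \<theta>0))"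
                using zero by (simp add: norm_minus_commute)
              also have "\<dots> \<le> 1 / (2 * LA) * norm (\<theta> - \<theta>0)" using dG nt \<rho>d by simp
              finally have "norm (A *v (G *v (\<theta> - \<theta>0) - Q.gp \<theta>)) \<le> 1 / (2 * LA) * norm (\<theta> - \<theta>0) * LA"
                using LA0 by (simp add: mult_right_mono)
              also have "\<dots> = norm (\<theta> - \<theta>0) / 2" using LA0 by simp
              also have "\<dots> \<le> \<rho> / 2" using nt by simp
              finally show ?thesis .
            qed
            have t2: "norm (A *v (Q.gt n \<omega> \<theta> - Q.gp \<theta>)) \<le> \<rho> / 2"
            proof -
              have "norm (A *v (Q.gt n \<omega> \<theta> - Q.gp \<theta>)) \<le> norm (Q.gt n \<omega> \<theta> - Q.gp \<theta>) * LA" by (rule LA)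
              also have "\<dots> \<le> \<eta> * LA" using Bg[OF om th] LA0 by (intro mult_right_mono) auto
              also have "\<dots> = \<rho> / 2" using LA0 by (simp add: \<eta>_def)
              finally show ?thesis .
            qed
            have "norm (\<Phi> \<theta> - \<theta>0) \<le> \<rho>"
              unfolding eq using norm_triangle_ineq4[of "A *v (G *v (\<theta> - \<theta>0) - Q.gp \<theta>)" "A *v (Q.gt n \<omega> \<theta> - Q.gp \<theta>)"] t1 t2
              by linarith
            then show "\<Phi> \<theta> \<in> cball \<theta>0 \<rho>" by (simp add: dist_norm norm_minus_commute)
          qed
          obtain \<theta>s where ths: "\<theta>s \<in> cball \<theta>0 \<rho>" and fxp: "\<Phi> \<theta>s = \<theta>s"
            using brouwer_ball[OF \<rho>0 cont maps] by blast
          have "A *v Q.gt n \<omega> \<theta>s = 0" using fxp unfolding \<Phi>_def by simp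
          then have gt0: "Q.gt n \<omega> \<theta>s = 0" using GAv[of "Q.gt n \<omega> \<theta>s"] by simp
          have gs: "norm (ghat tau Y W Z n \<theta>s \<omega>) \<le> 2 * k * m / real n"
            using Bg[OF om ths] gt0 by (simp add: k_def)
          have thsT: "\<theta>s \<in> \<Theta>" using ths \<rho>\<Theta> by blast
          have omS: "\<omega> \<in> space M" using om by simp
          have "norm (ghat tau Y W Z n (\<theta>hat n \<omega>) \<omega>) \<le> k * maxabs (ghat tau Y W Z n (\<theta>hat n \<omega>) \<omega>)"
            unfolding k_def by (rule norm_le_maxabs)
          also have "\<dots> \<le> k * lp_norm p (ghat tau Y W Z n (\<theta>hat n \<omega>) \<omega>)"
            using lp_norm_ge[OF p] k1 by (intro mult_left_mono) auto
          also have "\<dots> \<le> k * lp_norm p (ghat tau Y W Z n \<theta>s \<omega>)"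
            using est_min[OF omS thsT] k1 by (intro mult_left_mono) auto
          also have "\<dots> \<le> k * (k * maxabs (ghat tau Y W Z n \<theta>s \<omega>))"
            using lp_norm_le[OF p] k1 unfolding k_def by (intro mult_left_mono) auto
          also have "\<dots> \<le> k * (k * norm (ghat tau Y W Z n \<theta>s \<omega>))"
            using maxabs_le_norm k1 by (intro mult_left_mono) auto
          also have "\<dots> \<le> k * (k * (2 * k * m / real n))"
            using gs k1 by (intro mult_left_mono) auto
          also have "\<dots> = 2 * k^3 * m / real n" by (simp add: power3_eq_cube)
          also have "\<dots> < C * (m ^ 3 / real n)"
          proof -
            have "C * (m ^ 3 / real n) = 2 * k^3 * m / real n + m^3 / real n"
              using m0 n0 by (simp add: C_def field_simps power2_eq_square power3_eq_cube)
            moreover have "m^3 / real n > 0" using m0 n0 by simp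
            ultimately show ?thesis by linarith
          qed
          also have "\<dots> \<le> C * (m ^ 3 * (real s) ^ 2 / (real n) powr (1 - \<gamma>))"
          proof (rule mult_left_mono)
            have np: "real n powr (1 - \<gamma>) \<le> real n"
            proof -
              have "real n powr (1 - \<gamma>) \<le> real n powr 1"
                using \<gamma> n0 by (intro powr_mono) auto
              then show ?thesis using n0 by simp
            qed
            have npos: "real n powr (1 - \<gamma>) > 0" using n0 by simp
            have "m ^ 3 / real n \<le> m ^ 3 / real n powr (1 - \<gamma>)"
              using np npos m0 by (intro divide_left_mono) auto
            also have "\<dots> \<le> m ^ 3 * (real s) ^ 2 / real n powr (1 - \<gamma>)"
            proof (rule divide_right_mono)
              have "1 \<le> (real s)^2" using s1 by (simp add: one_le_power)
              then show "m ^ 3 \<le> m ^ 3 * (real s)^2" using m0 by simp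
            qed (use npos in simp)
            finally show "m ^ 3 / real n \<le> m ^ 3 * (real s) ^ 2 / real n powr (1 - \<gamma>)" .
            have "0 \<le> 2 * k^3 / m^2" using k1 by simp
            then show "0 \<le> C" by (simp add: C_def)
          qed
          finally have "norm (ghat tau Y W Z n (\<theta>hat n \<omega>) \<omega>) < C * (m ^ 3 * (real s) ^ 2 / real n powr (1 - \<gamma>))" .
          then show False using om1 by simp
        qed
        show "measure M {\<omega>\<in>space M. norm (ghat tau Y W Z n (\<theta>hat n \<omega>) \<omega>) > C * (m ^ 3 * (real s) ^ 2 / (real n) powr (1 - \<gamma>))} < \<epsilon>"
        proof (cases "{\<omega>\<in>space M. norm (ghat tau Y W Z n (\<theta>hat n \<omega>) \<omega>) > C * (m ^ 3 * (real s) ^ 2 / (real n) powr (1 - \<gamma>))} \<in> sets M")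
          case True
          then show ?thesis using P.finite_measure_mono[OF incl B(1)] B(2) by linarith
        next
          case False
          then show ?thesis using measure_notin_sets[OF False] B(2) measure_nonneg[of M B] by linarith
        qed
      qed
    qed
  qed (simp)
qed

end
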